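(* Let $\beta\in(0,n)$ and $1\le p<n/\beta$. Then for all $f\in C_0^\infty(\mathbb{R}^n)$, $$\left(\int_{\mathbb{R}^n}|f(x)|^{\frac{np}{n-p\beta}}dx\right)^{\frac{n-p\beta}{np}}\lesssim\left(\int_0^\infty V(O_t(f))^{\frac{n-p\beta}{n}}\,d(t^p)\right)^{1/p}\lesssim\|f\|_{\dot{\Lambda}^{p,p}_\beta(\mathbb{R}^n)},$$ with implicit constants independent of $f$.
   Context: $C_0^\infty(\mathbb{R}^n)$ is the space of compactly supported smooth functions, $V$ is Lebesgue measure, and $O_t(f)=\{x:|f(x)|>t\}$. Besov norm: let $k=1+\lfloor\beta\rfloor$, $\Delta^1_h f(x)=f(x+h)-f(x)$ and $\Delta^k_h=\Delta^1_h\Delta^{k-1}_h$. Then $$\|f\|_{\dot{\Lambda}^{p,p}_\beta(\mathbb{R}^n)}=\left(\int_{\mathbb{R}^n}\|\Delta^k_h f\|_{L^p}^p|h|^{-(n+\beta p)}dh\right)^{1/p}.$$ *)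

theory Defs
  imports "HOL-Analysis.Analysis"
begin

fun Ck :: "nat \<Rightarrow> ('a::euclidean_space \<Rightarrow> real) \<Rightarrow> bool" where
  "Ck 0 f = continuous_on UNIV f"
| "Ck (Suc k) f = ((\<forall>x. f differentiable (at x)) \<and>
      (\<forall>v. Ck k (\<lambda>x. frechet_derivative f (at x) v)))"


definition C0_inf :: "('a::euclidean_space \<Rightarrow> real) \<Rightarrow> bool" where
  "C0_inf f \<longleftrightarrow> (\<forall>k. Ck k f) \<and> compact (closure {x. f x \<noteq> 0})"


definition level_set :: "('a \<Rightarrow> real) \<Rightarrow> real \<Rightarrow> 'a set" where
  "level_set f t = {x. \<bar>f x\<bar> > t}"


fun fdiff :: "nat \<Rightarrow> 'a::real_vector \<Rightarrow> ('a \<Rightarrow> real) \<Rightarrow> 'a \<Rightarrow> real" where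
  "fdiff 0 h f x = f x"
| "fdiff (Suc k) h f x = fdiff k h f (x + h) - fdiff k h f x"


definition besov_norm :: "real \<Rightarrow> real \<Rightarrow> ('a::euclidean_space \<Rightarrow> real) \<Rightarrow> real" where
  "besov_norm \<beta> p f =
     (enn2real (\<integral>\<^sup>+ h. ((\<integral>\<^sup>+ x. ennreal (\<bar>fdiff (nat (1 + \<lfloor>\<beta>\<rfloor>)) h f x\<bar> powr p) \<partial>lborel)
         * ennreal (norm h powr (- (real DIM('a) + \<beta> * p)))) \<partial>lborel)) powr (1 / p)"

end

theory Submission
  imports Defs
begin

lemma seq_comb:
  fixes a :: "nat \<Rightarrow> real" and r g C0 V :: real
  assumes a0: "\<And>i. 0 \<le> a i" and amono: "\<And>i. a i \<le> a (Suc i)" and aV: "\<And>i. a i \<le> V"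
    and r: "0 < r" "r < 1" and g: "0 < g" "g < 1" and C0: "0 \<le> C0"
  defines "c \<equiv> \<lambda>i. C0 * r ^ i * a i powr (1 - g)"
  defines "u \<equiv> \<lambda>i. C0 * r ^ Suc i * a i * a (Suc i) powr (- g)"
  defines "\<theta> \<equiv> (r / 2) powr (1 / (1 - g))"
  shows "summable c" "summable u" "suminf c \<le> 2 / (r * \<theta>) * suminf u"
proof -
  have V0: "0 \<le> V" using a0 aV by (meson order_trans)
  have th: "0 < \<theta>" using r by (simp add: \<theta>_def)
  have th1: "\<theta> powr (1 - g) = r / 2" using r g
    by (simp add: \<theta>_def powr_powr)
  have cb: "\<And>i. 0 \<le> c i \<and> c i \<le> C0 * V powr (1 - g) * r ^ i"
  proof
    fix i show "0 \<le> c i" using C0 r a0 by (simp add: c_def)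
    have "a i powr (1 - g) \<le> V powr (1 - g)" using a0 aV g by (simp add: powr_mono2)
    then have "C0 * r ^ i * a i powr (1 - g) \<le> C0 * r ^ i * V powr (1 - g)" using C0 r
      by (intro mult_left_mono) auto
    then show "c i \<le> C0 * V powr (1 - g) * r ^ i" by (simp add: c_def mult_ac)
  qed
  have geo: "summable (\<lambda>i. C0 * V powr (1 - g) * r ^ i)"
    using r by (intro summable_mult summable_geometric) simp
  show sc: "summable c"
    by (rule summable_comparison_test'[OF geo]) (use cb in auto)
  have ub: "\<And>i. 0 \<le> u i \<and> u i \<le> c (Suc i)"
  proof
    fix i
    show "0 \<le> u i" using C0 r a0 by (simp add: u_def)
    show "u i \<le> c (Suc i)"
    proof (cases "a (Suc i) = 0")
      case True then show ?thesis using C0 r a0 by (simp add: u_def c_def)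
    next
      case False
      then have pos: "0 < a (Suc i)" using a0[of "Suc i"] by linarith
      have "a i * a (Suc i) powr (- g) \<le> a (Suc i) * a (Suc i) powr (- g)"
        using amono a0 by (simp add: mult_right_mono)
      also have "\<dots> = a (Suc i) powr (1 - g)" using pos
        by (simp add: powr_diff powr_minus divide_inverse)
      finally have "C0 * r ^ Suc i * (a i * a (Suc i) powr (- g)) \<le> C0 * r ^ Suc i * a (Suc i) powr (1 - g)"
        using C0 r by (intro mult_left_mono) auto
      then show ?thesis unfolding u_def c_def by (simp add: mult_ac)
    qed
  qed
  show su: "summable u"
    by (rule summable_comparison_test'[where g="\<lambda>i. c (Suc i)"])
       (use ub sc in \<open>auto intro: summable_mult simp: summable_Suc_iff\<close>)
  have key: "\<And>i. c i \<le> 1/2 * c (Suc i) + 1 / (r * \<theta>) * u i"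
  proof -
    fix i
    show "c i \<le> 1/2 * c (Suc i) + 1 / (r * \<theta>) * u i"
    proof (cases "a i < \<theta> * a (Suc i)")
      case True
      have "a i powr (1 - g) \<le> (\<theta> * a (Suc i)) powr (1 - g)"
        using True a0 g by (intro powr_mono2) auto
      also have "\<dots> = r / 2 * a (Suc i) powr (1 - g)"
        using th a0 th1 by (simp add: powr_mult)
      finally have "c i \<le> C0 * r ^ i * (r / 2 * a (Suc i) powr (1 - g))"
        unfolding c_def using C0 r by (intro mult_left_mono) auto
      also have "\<dots> = 1/2 * c (Suc i)" by (simp add: c_def)
      finally have "c i \<le> 1/2 * c (Suc i)" .
      moreover have "0 \<le> 1 / (r * \<theta>) * u i" using ub[of i] th r by simp
      ultimately show ?thesis by linarith
    next
      case False
      show ?thesis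
      proof (cases "a (Suc i) = 0")
        case True
        then have "a i = 0" using amono[of i] a0[of i] by simp
        then show ?thesis using ub[of i] cb[of "Suc i"] th r by (simp add: c_def)
      next
        case F2: False
        then have pos: "0 < a (Suc i)" using a0[of "Suc i"] by linarith
        have "a i powr (1 - g) \<le> a (Suc i) powr (1 - g)"
          using amono a0 g by (intro powr_mono2) auto
        also have "\<dots> = a (Suc i) * a (Suc i) powr (- g)" using pos
          by (simp add: powr_diff powr_minus divide_inverse)
        also have "\<dots> \<le> (a i / \<theta>) * a (Suc i) powr (- g)"
          using False th by (intro mult_right_mono) (auto simp: field_simps)
        finally have "c i \<le> C0 * r ^ i * ((a i / \<theta>) * a (Suc i) powr (- g))"
          unfolding c_def using C0 r by (intro mult_left_mono) auto
        also have "\<dots> = 1 / (r * \<theta>) * u i" using r th by (simp add: u_def field_simps)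
        finally show ?thesis using cb[of "Suc i"] by simp
      qed
    qed
  qed
  have "suminf c \<le> (\<Sum>i. 1/2 * c (Suc i) + 1 / (r * \<theta>) * u i)"
    by (rule suminf_le[OF key sc]) (use sc su in \<open>auto intro!: summable_add summable_mult simp: summable_Suc_iff\<close>)
  also have "\<dots> = 1/2 * (\<Sum>i. c (Suc i)) + 1 / (r * \<theta>) * suminf u"
    using sc su by (subst suminf_add[symmetric]) (auto intro!: summable_mult simp: summable_Suc_iff suminf_mult suminf_divide)
  finally have h1: "suminf c \<le> 1/2 * (\<Sum>i. c (Suc i)) + 1 / (r * \<theta>) * suminf u" .
  have "(\<Sum>i. c (Suc i)) \<le> suminf c"
    using sc cb by (subst suminf_split_head) auto
  with h1 show "suminf c \<le> 2 / (r * \<theta>) * suminf u" by simp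
qed

lemma fdiff_bound:
  fixes f :: "'a::real_vector \<Rightarrow> real"
  assumes "\<And>j. j \<le> k \<Longrightarrow> \<bar>f (y + of_nat j *\<^sub>R h)\<bar> \<le> e"
  shows "\<bar>fdiff k h f y\<bar> \<le> 2 ^ k * e"
  using assms
proof (induction k arbitrary: y)
  case 0
  then show ?case by simp
next
  case (Suc k)
  have a: "\<bar>fdiff k h f (y + h)\<bar> \<le> 2 ^ k * e"
    using Suc.prems[of "Suc _"] by (intro Suc.IH) (auto simp: algebra_simps)
  have b: "\<bar>fdiff k h f y\<bar> \<le> 2 ^ k * e"
    using Suc.prems by (intro Suc.IH) auto
  show ?case using a b by simp
qed

lemma fdiff_main:
  fixes f :: "'a::real_vector \<Rightarrow> real"
  assumes "\<And>j. 1 \<le> j \<Longrightarrow> j \<le> k \<Longrightarrow> \<bar>f (x + of_nat j *\<^sub>R h)\<bar> \<le> e"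
  shows "\<bar>fdiff k h f x - (-1) ^ k * f x\<bar> \<le> (2 ^ k - 1) * e"
  using assms
proof (induction k)
  case 0
  then show ?case by simp
next
  case (Suc k)
  have a: "\<bar>fdiff k h f (x + h)\<bar> \<le> 2 ^ k * e"
    using Suc.prems[of "Suc _"] by (intro fdiff_bound) (auto simp: algebra_simps)
  have b: "\<bar>fdiff k h f x - (-1) ^ k * f x\<bar> \<le> (2 ^ k - 1) * e"
    using Suc.prems by (intro Suc.IH) auto
  have eq: "fdiff (Suc k) h f x - (-1) ^ Suc k * f x = fdiff k h f (x + h) - (fdiff k h f x - (-1) ^ k * f x)"
    by simp
  have "\<bar>fdiff k h f (x + h) - (fdiff k h f x - (-1) ^ k * f x)\<bar> \<le> 2 ^ k * e + (2 ^ k - 1) * e"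
    using a b by (smt (verit, best) abs_triangle_ineq4)
  then show ?case unfolding eq by (simp add: algebra_simps)
qed

lemma fdiff_support:
  fixes f :: "'a::real_vector \<Rightarrow> real"
  assumes "fdiff k h f y \<noteq> 0"
  shows "\<exists>j\<le>k. f (y + of_nat j *\<^sub>R h) \<noteq> 0"
proof (rule ccontr)
  assume "\<not> ?thesis"
  then have "\<bar>fdiff k h f y\<bar> \<le> 2 ^ k * 0" by (intro fdiff_bound) auto
  with assms show False by simp
qed

lemma fdiff_cont:
  fixes f :: "'a::real_normed_vector \<Rightarrow> real"
  assumes "continuous_on UNIV f"
  shows "continuous_on UNIV (\<lambda>z. fdiff k (fst z) f (snd z))"
proof (induction k)
  case 0
  then show ?case using assms
    by (auto intro!: continuous_on_compose2[OF assms] continuous_intros)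
next
  case (Suc k)
  have "continuous_on UNIV ((\<lambda>z. fdiff k (fst z) f (snd z)) o (\<lambda>z. (fst z, snd z + fst z)))"
    by (rule continuous_on_compose) (auto intro!: continuous_intros continuous_on_subset[OF Suc.IH])
  then have "continuous_on UNIV (\<lambda>z. fdiff k (fst z) f (snd z + fst z))" by (simp add: o_def)
  then show ?case using Suc.IH by (auto intro!: continuous_intros)
qed

lemma fdiff_measurable:
  fixes f :: "'a::euclidean_space \<Rightarrow> real"
  assumes "continuous_on UNIV f"
  shows "(\<lambda>z. fdiff k (fst z) f (snd z)) \<in> borel_measurable borel"
  by (rule borel_measurable_continuous_onI[OF fdiff_cont[OF assms]])

lemma C0_inf_cont: "C0_inf f \<Longrightarrow> continuous_on UNIV f"
  unfolding C0_inf_def by (metis Ck.simps(1))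

lemma C0_inf_diff: "C0_inf f \<Longrightarrow> f differentiable (at x)"
  unfolding C0_inf_def by (metis Ck.simps(2))

lemma C0_inf_bounded:
  fixes f :: "'a::euclidean_space \<Rightarrow> real"
  assumes "C0_inf f"
  obtains M where "M \<ge> 0" "\<And>x. \<bar>f x\<bar> \<le> M"
proof -
  have c: "continuous_on UNIV f" using assms by (rule C0_inf_cont)
  have K: "compact (closure {x. f x \<noteq> 0})" using assms by (simp add: C0_inf_def)
  obtain B where B: "B \<ge> 0" "\<And>x. x \<in> closure {x. f x \<noteq> 0} \<Longrightarrow> norm (f x) \<le> B"
    using continuous_on_compact_bound[OF K continuous_on_subset[OF c]] by blast
  have "\<bar>f x\<bar> \<le> B" for x
  proof (cases "f x = 0")
    case False then have "x \<in> closure {x. f x \<noteq> 0}" by (simp add: closure_def)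
    then show ?thesis using B by auto
  qed (use B in auto)
  then show ?thesis using that B by blast
qed

lemma C0_inf_deriv:
  fixes f :: "'a::euclidean_space \<Rightarrow> real"
  assumes "C0_inf f"
  shows "C0_inf (\<lambda>x. frechet_derivative f (at x) v)"
proof -
  have ck: "Ck k (\<lambda>x. frechet_derivative f (at x) v)" for k
    using assms unfolding C0_inf_def by (metis Ck.simps(2))
  let ?C = "closure {x. f x \<noteq> 0}"
  have sub: "{x. frechet_derivative f (at x) v \<noteq> 0} \<subseteq> ?C"
  proof
    fix y assume y: "y \<in> {x. frechet_derivative f (at x) v \<noteq> 0}"
    show "y \<in> ?C"
    proof (rule ccontr)
      assume ny: "y \<notin> ?C"
      have zero: "f z = 0" if "z \<notin> ?C" for z using that closure_subset[of "{x. f x \<noteq> 0}"] by blast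
      have "((\<lambda>_. 0) has_derivative (\<lambda>_. 0)) (at y)" by simp
      then have "(f has_derivative (\<lambda>_. 0)) (at y)"
      proof (rule has_derivative_transform_within_open[where s="- ?C"])
        show "open (- ?C)" by (simp add: open_Compl)
        show "y \<in> - ?C" using ny by simp
        fix x assume "x \<in> - ?C"
        then have "x \<notin> ?C" by blast
        then show "0 = f x" using zero[of x] by argo
      qed
      then have "frechet_derivative f (at y) = (\<lambda>_. 0)" by (metis frechet_derivative_at)
      with y show False by simp
    qed
  qed
  have "closure {x. frechet_derivative f (at x) v \<noteq> 0} \<subseteq> ?C"
    by (rule closure_minimal[OF sub]) simp
  then have "compact (?C \<inter> closure {x. frechet_derivative f (at x) v \<noteq> 0})"
    using assms by (intro compact_Int_closed) (auto simp: C0_inf_def)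
  then have "compact (closure {x. frechet_derivative f (at x) v \<noteq> 0})"
    using \<open>closure _ \<subseteq> ?C\<close> by (simp add: Int_absorb1)
  then show ?thesis using ck by (simp add: C0_inf_def)
qed

lemma fdiff_has_derivative:
  fixes f :: "'a::euclidean_space \<Rightarrow> real"
  assumes d: "\<And>x. f differentiable (at x)"
  shows "((\<lambda>y. fdiff k h f y) has_derivative (\<lambda>v. fdiff k h (\<lambda>y. frechet_derivative f (at y) v) x)) (at x)"
proof (induction k arbitrary: x)
  case 0
  then show ?case using d[of x] by (simp add: frechet_derivative_works)
next
  case (Suc k)
  have t: "((\<lambda>y. y + h) has_derivative (\<lambda>v. v)) (at x)" by (auto intro!: derivative_eq_intros)
  have "(((\<lambda>y. fdiff k h f y) o (\<lambda>y. y + h)) has_derivative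
          ((\<lambda>v. fdiff k h (\<lambda>y. frechet_derivative f (at y) v) (x + h)) o (\<lambda>v. v))) (at x)"
    by (rule diff_chain_at[OF t]) (rule Suc.IH)
  then have a: "((\<lambda>y. fdiff k h f (y + h)) has_derivative
          (\<lambda>v. fdiff k h (\<lambda>y. frechet_derivative f (at y) v) (x + h))) (at x)"
    by (simp add: o_def)
  show ?case using has_derivative_diff[OF a Suc.IH[of x]] by simp
qed

lemma fdiff_sum:
  fixes g :: "'b \<Rightarrow> 'a::real_vector \<Rightarrow> real"
  shows "fdiff k h (\<lambda>y. \<Sum>i\<in>I. c i * g i y) x = (\<Sum>i\<in>I. c i * fdiff k h (g i) x)"
  by (induction k arbitrary: x) (auto simp: sum_subtractf[symmetric] right_diff_distrib)

lemma fdiff_scale: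
  fixes g :: "'a::real_vector \<Rightarrow> real"
  shows "fdiff k h (\<lambda>y. c * g y) x = c * fdiff k h g x"
  by (induction k arbitrary: x) (auto simp: right_diff_distrib)

lemma fdiff_smooth_bound:
  fixes f :: "'a::euclidean_space \<Rightarrow> real"
  assumes "C0_inf f"
  shows "\<exists>M. \<forall>h x. \<bar>fdiff k h f x\<bar> \<le> M * norm h ^ k"
  using assms
proof (induction k arbitrary: f)
  case 0
  then obtain M where "M \<ge> 0" "\<And>x. \<bar>f x\<bar> \<le> M" using C0_inf_bounded by blast
  then show ?case by auto
next
  case (Suc k)
  let ?D = "\<lambda>y v. frechet_derivative f (at y) v"
  have d: "\<And>x. f differentiable (at x)" using Suc.prems by (rule C0_inf_diff)
  have "\<forall>i\<in>Basis. \<exists>M. \<forall>h x. \<bar>fdiff k h (\<lambda>y. ?D y i) x\<bar> \<le> M * norm h ^ k"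
    using Suc.IH[OF C0_inf_deriv[OF Suc.prems]] by blast
  then obtain Mf where Mf: "\<And>i h x. i \<in> Basis \<Longrightarrow> \<bar>fdiff k h (\<lambda>y. ?D y i) x\<bar> \<le> Mf i * norm h ^ k"
    by metis
  have lin: "linear (?D y)" for y
    using d[of y] by (simp add: frechet_derivative_works has_derivative_linear)
  have Dsum: "?D y h = (\<Sum>i\<in>Basis. (h \<bullet> i) * ?D y i)" for y h
  proof -
    have "?D y h = ?D y (\<Sum>i\<in>Basis. (h \<bullet> i) *\<^sub>R i)" by (simp add: euclidean_representation)
    also have "\<dots> = (\<Sum>i\<in>Basis. (h \<bullet> i) * ?D y i)"
      using lin[of y] by (simp add: linear_sum linear_cmul)
    finally show ?thesis .
  qed
  have "\<bar>fdiff (Suc k) h f x\<bar> \<le> (\<Sum>i\<in>Basis. \<bar>Mf i\<bar>) * norm h ^ Suc k" for h x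
  proof -
    define \<phi> where "\<phi> s = fdiff k h f (x + s *\<^sub>R h)" for s :: real
    define \<phi>' where "\<phi>' s = fdiff k h (\<lambda>y. ?D y h) (x + s *\<^sub>R h)" for s :: real
    have der: "(\<phi> has_real_derivative \<phi>' s) (at s)" for s
    proof -
      have t: "((\<lambda>s. x + s *\<^sub>R h) has_derivative (\<lambda>r. r *\<^sub>R h)) (at s)"
        by (auto intro!: derivative_eq_intros)
      have "(((\<lambda>y. fdiff k h f y) o (\<lambda>s. x + s *\<^sub>R h)) has_derivative
          ((\<lambda>v. fdiff k h (\<lambda>y. ?D y v) (x + s *\<^sub>R h)) o (\<lambda>r. r *\<^sub>R h))) (at s)"
        by (rule diff_chain_at[OF t]) (rule fdiff_has_derivative[OF d])
      moreover have "((\<lambda>v. fdiff k h (\<lambda>y. ?D y v) (x + s *\<^sub>R h)) o (\<lambda>r. r *\<^sub>R h)) = (\<lambda>r. \<phi>' s * r)"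
      proof
        fix r
        have "(\<lambda>y. ?D y (r *\<^sub>R h)) = (\<lambda>y. r * ?D y h)"
          using lin by (simp add: linear_cmul)
        then show "((\<lambda>v. fdiff k h (\<lambda>y. ?D y v) (x + s *\<^sub>R h)) o (\<lambda>r. r *\<^sub>R h)) r = \<phi>' s * r"
          by (simp add: \<phi>'_def fdiff_scale)
      qed
      ultimately show ?thesis unfolding has_field_derivative_def \<phi>_def[abs_def] by (simp add: o_def)
    qed
    obtain z where z: "0 < z" "z < 1" "\<phi> 1 - \<phi> 0 = (1 - 0) * \<phi>' z"
      using MVT2[of 0 1 \<phi> \<phi>'] der by auto
    have "fdiff (Suc k) h f x = \<phi>' z" using z by (simp add: \<phi>_def)
    also have "\<dots> = (\<Sum>i\<in>Basis. (h \<bullet> i) * fdiff k h (\<lambda>y. ?D y i) (x + z *\<^sub>R h))"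
    proof -
      have e: "(\<lambda>y. ?D y h) = (\<lambda>y. \<Sum>i\<in>Basis. (h \<bullet> i) * ?D y i)" by (rule ext, rule Dsum)
      show ?thesis unfolding \<phi>'_def e by (rule fdiff_sum)
    qed
    also have "\<bar>\<dots>\<bar> \<le> (\<Sum>i\<in>Basis. \<bar>(h \<bullet> i) * fdiff k h (\<lambda>y. ?D y i) (x + z *\<^sub>R h)\<bar>)"
      by (rule sum_abs)
    also have "\<dots> \<le> (\<Sum>i\<in>Basis. norm h * (\<bar>Mf i\<bar> * norm h ^ k))"
    proof (rule sum_mono)
      fix i :: 'a assume i: "i \<in> Basis"
      have "\<bar>h \<bullet> i\<bar> \<le> norm h" using i by (rule Basis_le_norm)
      moreover have "\<bar>fdiff k h (\<lambda>y. ?D y i) (x + z *\<^sub>R h)\<bar> \<le> \<bar>Mf i\<bar> * norm h ^ k"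
        using Mf[OF i, of h] by (meson abs_ge_self mult_right_mono norm_ge_zero order_trans zero_le_power)
      ultimately show "\<bar>(h \<bullet> i) * fdiff k h (\<lambda>y. ?D y i) (x + z *\<^sub>R h)\<bar> \<le> norm h * (\<bar>Mf i\<bar> * norm h ^ k)"
        unfolding abs_mult by (intro mult_mono) auto
    qed
    also have "\<dots> = (\<Sum>i\<in>Basis. \<bar>Mf i\<bar>) * norm h ^ Suc k"
      by (simp add: sum_distrib_right sum_distrib_left mult_ac)
    finally show ?thesis .
  qed
  then have "\<forall>h x. \<bar>fdiff (Suc k) h f x\<bar> \<le> (\<Sum>i\<in>Basis. \<bar>Mf i\<bar>) * norm h ^ Suc k" by (intro allI)
  then show ?case by (rule exI)
qed

lemma ennreal_term_le_suminf: "(f i :: ennreal) \<le> suminf f"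
  using sum_le_suminf[OF summableI, of "{i}" f] by simp

lemma shell_small:
  fixes x :: real
  assumes "0 < x" "x < 1"
  shows "\<exists>j::nat. (1/2) ^ Suc j < x \<and> x \<le> (1/2) ^ j"
proof -
  define j where "j = nat \<lfloor>log 2 (1/x)\<rfloor>"
  have ge: "log 2 (1/x) \<ge> 0" using assms by simp
  have "\<lfloor>log 2 (1/x)\<rfloor> = int j" using ge by (simp add: j_def)
  then have "2 powr (real j) \<le> 1/x \<and> 1/x < 2 powr (real j + 1)"
    using assms floor_log_eq_powr_iff[of "1/x" 2 "int j"] by simp
  then have "2 ^ j \<le> 1/x \<and> 1/x < 2 ^ Suc j"
    by (simp add: powr_realpow powr_add)
  then have "(1/2) ^ Suc j < x \<and> x \<le> (1/2) ^ j"
    using assms by (simp add: power_one_over field_simps)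
  then show ?thesis by blast
qed

lemma shell_large:
  fixes x :: real
  assumes "1 \<le> x"
  shows "\<exists>j::nat. 2 ^ j \<le> x \<and> x < 2 ^ Suc j"
proof -
  define j where "j = nat \<lfloor>log 2 x\<rfloor>"
  have ge: "log 2 x \<ge> 0" using assms by simp
  have "\<lfloor>log 2 x\<rfloor> = int j" using ge by (simp add: j_def)
  then have "2 powr (real j) \<le> x \<and> x < 2 powr (real j + 1)"
    using assms floor_log_eq_powr_iff[of x 2 "int j"] by simp
  then have "2 ^ j \<le> x \<and> x < 2 ^ Suc j"
    by (simp add: powr_realpow powr_add)
  then show ?thesis by blast
qed

lemma emeasure_cball_le:
  fixes A :: "'a::euclidean_space set"
  assumes "A \<subseteq> cball 0 R" "A \<in> sets lborel" "R \<ge> 0"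
  shows "emeasure lborel A \<le> ennreal (unit_ball_vol (DIM('a)) * R ^ DIM('a))"
  using emeasure_mono[OF assms(1), of lborel] emeasure_cball[OF assms(3), of "0::'a"] by simp

lemma ball_int_finite:
  fixes a :: real
  assumes "a < real DIM('a::euclidean_space)"
  shows "(\<integral>\<^sup>+h. indicator (ball (0::'a) 1) h * ennreal (norm h powr (- a)) \<partial>lborel) < \<infinity>"
proof -
  let ?n = "DIM('a)"
  let ?w = "unit_ball_vol (real ?n)"
  define E where "E j = {h::'a. (1/2) ^ Suc j < norm h \<and> norm h \<le> (1/2) ^ j}" for j :: nat
  define c where "c j = 2 powr \<bar>a\<bar> * 2 powr (real j * a)" for j :: nat
  have Em[measurable]: "E j \<in> sets lborel" for j unfolding E_def by measurable
  have bnd: "norm h powr (- a) \<le> c j" if "h \<in> E j" for h j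
  proof -
    have h1: "(1/2) ^ Suc j < norm h" "norm h \<le> (1/2) ^ j" using that by (auto simp: E_def)
    have pos: "0 < norm h" using h1 by (meson less_trans zero_less_divide_iff zero_less_one zero_less_numeral zero_less_power)
    show ?thesis
    proof (cases "a \<ge> 0")
      case True
      have "norm h powr (- a) \<le> ((1/2) ^ Suc j) powr (- a)"
        using h1 True by (intro powr_mono2') auto
      also have "(1/2::real) ^ Suc j = 2 powr (- real (Suc j))"
        by (subst powr_minus_divide, subst powr_realpow) (auto simp: power_one_over)
      also have "(2 powr (- real (Suc j))) powr (- a) = 2 powr (real (Suc j) * a)"
        by (simp add: powr_powr algebra_simps)
      also have "\<dots> = 2 powr a * 2 powr (real j * a)"
        by (simp add: powr_add[symmetric] algebra_simps)
      finally show ?thesis using True by (simp add: c_def)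
    next
      case False
      have "norm h powr (- a) \<le> ((1/2) ^ j) powr (- a)"
        using h1 False pos by (intro powr_mono2) auto
      also have "(1/2::real) ^ j = 2 powr (- real j)"
        by (subst powr_minus_divide, subst powr_realpow) (auto simp: power_one_over)
      also have "(2 powr (- real j)) powr (- a) = 2 powr (real j * a)"
        by (simp add: powr_powr algebra_simps)
      also have "\<dots> \<le> c j" unfolding c_def using ge_one_powr_ge_zero[of 2 "\<bar>a\<bar>"] by simp
      finally show ?thesis .
    qed
  qed
  have pw: "indicator (ball (0::'a) 1) h * ennreal (norm h powr (- a)) \<le> (\<Sum>j. ennreal (c j) * indicator (E j) h)" for h
  proof (cases "h \<in> ball 0 1 \<and> h \<noteq> 0")
    case True
    then obtain j where j: "(1/2) ^ Suc j < norm h \<and> norm h \<le> (1/2) ^ j"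
      using shell_small[of "norm h"] by auto
    then have hE: "h \<in> E j" by (simp add: E_def)
    have "indicator (ball (0::'a) 1) h * ennreal (norm h powr (- a)) \<le> ennreal (c j) * indicator (E j) h"
      using True hE bnd[OF hE] by (simp add: ennreal_leI)
    also have "\<dots> \<le> (\<Sum>j. ennreal (c j) * indicator (E j) h)" by (rule ennreal_term_le_suminf)
    finally show ?thesis .
  next
    case False
    then show ?thesis by (auto simp: indicator_def)
  qed
  have "(\<integral>\<^sup>+h. indicator (ball (0::'a) 1) h * ennreal (norm h powr (- a)) \<partial>lborel)
        \<le> (\<integral>\<^sup>+h. (\<Sum>j. ennreal (c j) * indicator (E j) h) \<partial>lborel)"
    by (intro nn_integral_mono pw)
  also have "\<dots> = (\<Sum>j. \<integral>\<^sup>+h. ennreal (c j) * indicator (E j) h \<partial>lborel)"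
    by (intro nn_integral_suminf) measurable
  also have "\<dots> = (\<Sum>j. ennreal (c j) * emeasure lborel (E j))"
    by (simp only: nn_integral_cmult_indicator[OF Em])
  also have "\<dots> \<le> (\<Sum>j. ennreal (c j * (?w * ((1/2) ^ j) ^ ?n)))"
  proof (intro suminf_le summableI)
    fix j
    have "emeasure lborel (E j) \<le> ennreal (?w * ((1/2) ^ j) ^ ?n)"
      by (rule emeasure_cball_le) (auto simp: E_def)
    then show "ennreal (c j) * emeasure lborel (E j) \<le> ennreal (c j * (?w * ((1/2) ^ j) ^ ?n))"
      by (simp add: c_def ennreal_mult mult_left_mono)
  qed
  also have "\<dots> = (\<Sum>j. ennreal ((2 powr \<bar>a\<bar> * ?w) * (2 powr (a - ?n)) ^ j))"
  proof -
    have eq: "c j * (?w * ((1/2) ^ j) ^ ?n) = (2 powr \<bar>a\<bar> * ?w) * (2 powr (a - ?n)) ^ j" for j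
      by (simp add: c_def powr_realpow[symmetric] powr_powr powr_diff power_one_over
          powr_minus_divide powr_divide algebra_simps power_mult[symmetric] powr_power)
    show ?thesis by (simp only: eq)
  qed
  also have "\<dots> < \<infinity>"
  proof -
    have r: "2 powr (a - ?n) < 1" using assms powr_less_mono[of "a - ?n" 0 2] by simp
    have "summable (\<lambda>j. (2 powr \<bar>a\<bar> * ?w) * (2 powr (a - ?n)) ^ j)"
      using r by (intro summable_mult summable_geometric) simp
    then have "(\<Sum>j. ennreal ((2 powr \<bar>a\<bar> * ?w) * (2 powr (a - ?n)) ^ j)) \<noteq> top"
      by (rule ennreal_suminf_neq_top) auto
    then show ?thesis by (simp add: less_top)
  qed
  finally show ?thesis .
qed

lemma out_int_finite:
  fixes b :: real
  assumes "real DIM('a::euclidean_space) < b"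
  shows "(\<integral>\<^sup>+h. indicator (- ball (0::'a) 1) h * ennreal (norm h powr (- b)) \<partial>lborel) < \<infinity>"
proof -
  let ?n = "DIM('a)"
  let ?w = "unit_ball_vol (real ?n)"
  have b0: "0 < b" using assms DIM_positive[where 'a='a] by linarith
  define E where "E j = {h::'a. 2 ^ j \<le> norm h \<and> norm h < 2 ^ Suc j}" for j :: nat
  define c where "c j = 2 powr (- (real j * b))" for j :: nat
  have Em[measurable]: "E j \<in> sets lborel" for j unfolding E_def by measurable
  have bnd: "norm h powr (- b) \<le> c j" if "h \<in> E j" for h j
  proof -
    have h1: "2 ^ j \<le> norm h" using that by (auto simp: E_def)
    have "norm h powr (- b) \<le> (2 ^ j) powr (- b)"
      using h1 b0 by (intro powr_mono2') auto
    also have "(2::real) ^ j = 2 powr (real j)"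
      by (simp add: powr_realpow)
    also have "(2 powr (real j)) powr (- b) = c j"
      by (simp add: powr_powr c_def)
    finally show ?thesis .
  qed
  have pw: "indicator (- ball (0::'a) 1) h * ennreal (norm h powr (- b)) \<le> (\<Sum>j. ennreal (c j) * indicator (E j) h)" for h
  proof (cases "h \<in> - ball 0 1")
    case True
    then obtain j where j: "2 ^ j \<le> norm h \<and> norm h < 2 ^ Suc j"
      using shell_large[of "norm h"] by auto
    then have hE: "h \<in> E j" by (simp add: E_def)
    have "indicator (- ball (0::'a) 1) h * ennreal (norm h powr (- b)) \<le> ennreal (c j) * indicator (E j) h"
      using True hE bnd[OF hE] by (simp add: ennreal_leI)
    also have "\<dots> \<le> (\<Sum>j. ennreal (c j) * indicator (E j) h)" by (rule ennreal_term_le_suminf)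
    finally show ?thesis .
  next
    case False
    then show ?thesis by (auto simp: indicator_def)
  qed
  have "(\<integral>\<^sup>+h. indicator (- ball (0::'a) 1) h * ennreal (norm h powr (- b)) \<partial>lborel)
        \<le> (\<integral>\<^sup>+h. (\<Sum>j. ennreal (c j) * indicator (E j) h) \<partial>lborel)"
    by (intro nn_integral_mono pw)
  also have "\<dots> = (\<Sum>j. \<integral>\<^sup>+h. ennreal (c j) * indicator (E j) h \<partial>lborel)"
    by (intro nn_integral_suminf) measurable
  also have "\<dots> = (\<Sum>j. ennreal (c j) * emeasure lborel (E j))"
    by (simp only: nn_integral_cmult_indicator[OF Em])
  also have "\<dots> \<le> (\<Sum>j. ennreal (c j * (?w * (2 ^ Suc j) ^ ?n)))"
  proof (intro suminf_le summableI)
    fix j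
    have "emeasure lborel (E j) \<le> ennreal (?w * (2 ^ Suc j) ^ ?n)"
      by (rule emeasure_cball_le) (auto simp: E_def)
    then show "ennreal (c j) * emeasure lborel (E j) \<le> ennreal (c j * (?w * (2 ^ Suc j) ^ ?n))"
      by (simp add: c_def ennreal_mult mult_left_mono)
  qed
  also have "\<dots> = (\<Sum>j. ennreal ((2 ^ ?n * ?w) * (2 powr (?n - b)) ^ j))"
  proof -
    have eq: "c j * (?w * (2 ^ Suc j) ^ ?n) = (2 ^ ?n * ?w) * (2 powr (?n - b)) ^ j" for j
    proof -
      have "(2::real) ^ Suc j = 2 * 2 powr (real j)" by (simp add: powr_realpow)
      then have "((2::real) ^ Suc j) ^ ?n = 2 ^ ?n * 2 powr (real j * ?n)"
        by (simp add: power_mult_distrib powr_realpow[symmetric] powr_powr)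
      moreover have "(2 powr (?n - b)) ^ j = 2 powr (real j * (?n - b))"
        by (simp add: powr_realpow[symmetric] powr_powr mult.commute)
      ultimately show ?thesis
        by (simp add: c_def powr_diff powr_minus algebra_simps powr_add[symmetric] right_diff_distrib
            divide_inverse)
    qed
    show ?thesis by (simp only: eq)
  qed
  also have "\<dots> < \<infinity>"
  proof -
    have r: "2 powr (?n - b) < 1" using assms powr_less_mono[of "?n - b" 0 2] by simp
    have "summable (\<lambda>j. (2 ^ ?n * ?w) * (2 powr (?n - b)) ^ j)"
      using r by (intro summable_mult summable_geometric) simp
    then have "(\<Sum>j. ennreal ((2 ^ ?n * ?w) * (2 powr (?n - b)) ^ j)) \<noteq> top"
      by (rule ennreal_suminf_neq_top) auto
    then show ?thesis by (simp add: less_top)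
  qed
  finally show ?thesis .
qed

lemma emeasure_translate:
  fixes S :: "'a::euclidean_space set"
  assumes "S \<in> sets borel"
  shows "emeasure lborel ((\<lambda>x. x + c) -` S) = emeasure lborel S"
proof -
  have "emeasure lborel S = emeasure (distr lborel borel ((+) c)) S"
    by (simp add: lborel_distr_plus)
  also have "\<dots> = emeasure lborel ((+) c -` S \<inter> space lborel)"
    using assms by (intro emeasure_distr) auto
  also have "(+) c -` S \<inter> space lborel = (\<lambda>x. x + c) -` S" by (auto simp: add.commute)
  finally show ?thesis by simp
qed

lemma inner_bound:
  fixes f :: "'a::euclidean_space \<Rightarrow> real" and S :: "'a set"
  assumes cont: "continuous_on UNIV f" and S: "closed S" "{x. f x \<noteq> 0} \<subseteq> S"
    and B: "\<And>x. \<bar>fdiff k h f x\<bar> \<le> B" and p: "0 < p"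
  shows "(\<integral>\<^sup>+x. ennreal (\<bar>fdiff k h f x\<bar> powr p) \<partial>lborel)
          \<le> ennreal (B powr p) * (of_nat (Suc k) * emeasure lborel S)"
proof -
  define E where "E = (\<Union>j\<in>{..k}. (\<lambda>x. x + of_nat j *\<^sub>R h) -` S)"
  have Sb: "S \<in> sets borel" using S by simp
  have Em: "(\<lambda>x. x + of_nat j *\<^sub>R h) -` S \<in> sets lborel" for j
  proof -
    have "(\<lambda>x. x + of_nat j *\<^sub>R h) \<in> borel_measurable borel" by simp
    from measurable_sets_borel[OF this Sb] show ?thesis by simp
  qed
  have EM: "E \<in> sets lborel" unfolding E_def using Em by auto
  have pw: "ennreal (\<bar>fdiff k h f x\<bar> powr p) \<le> ennreal (B powr p) * indicator E x" for x
  proof (cases "fdiff k h f x = 0")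
    case True then show ?thesis by simp
  next
    case False
    then obtain j where "j \<le> k" "f (x + of_nat j *\<^sub>R h) \<noteq> 0" using fdiff_support by blast
    then have "x \<in> E" using S(2) by (auto simp: E_def)
    moreover have "\<bar>fdiff k h f x\<bar> powr p \<le> B powr p" using B[of x] p by (intro powr_mono2) auto
    ultimately show ?thesis by (simp add: ennreal_leI)
  qed
  have "(\<integral>\<^sup>+x. ennreal (\<bar>fdiff k h f x\<bar> powr p) \<partial>lborel) \<le> (\<integral>\<^sup>+x. ennreal (B powr p) * indicator E x \<partial>lborel)"
    by (intro nn_integral_mono pw)
  also have "\<dots> = ennreal (B powr p) * emeasure lborel E" using EM by (simp add: nn_integral_cmult_indicator)
  also have "emeasure lborel E \<le> (\<Sum>j\<in>{..k}. emeasure lborel ((\<lambda>x. x + of_nat j *\<^sub>R h) -` S))"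
    unfolding E_def by (intro emeasure_subadditive_finite) (use Em in auto)
  also have "\<dots> = (\<Sum>j\<in>{..k}. emeasure lborel S)" using emeasure_translate[OF Sb] by simp
  also have "\<dots> = of_nat (Suc k) * emeasure lborel S" by simp
  finally show ?thesis by (simp add: mult_left_mono)
qed

lemma besov_int_finite:
  fixes f :: "'a::euclidean_space \<Rightarrow> real" and \<beta> p :: real
  assumes f: "C0_inf f" and b: "0 < \<beta>" and p: "0 < p"
  shows "(\<integral>\<^sup>+ h. ((\<integral>\<^sup>+ x. ennreal (\<bar>fdiff (nat (1 + \<lfloor>\<beta>\<rfloor>)) h f x\<bar> powr p) \<partial>lborel)
         * ennreal (norm h powr (- (real DIM('a) + \<beta> * p)))) \<partial>lborel) < \<infinity>"
proof -
  define k where "k = nat (1 + \<lfloor>\<beta>\<rfloor>)"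
  define n where "n = real DIM('a)"
  define e0 where "e0 = - (n + \<beta> * p)"
  have kb: "\<beta> < real k" unfolding k_def using b by linarith
  obtain M0 where M0: "\<And>h x. \<bar>fdiff k h f x\<bar> \<le> M0 * norm h ^ k" using fdiff_smooth_bound[OF f] by blast
  define M where "M = \<bar>M0\<bar>"
  have M: "\<bar>fdiff k h f x\<bar> \<le> M * norm h ^ k" for h x
    using M0[of h x] by (smt (verit, best) M_def mult_right_mono norm_ge_zero zero_le_power)
  have M00: "0 \<le> M" by (simp add: M_def)
  obtain T where T: "T \<ge> 0" "\<And>x. \<bar>f x\<bar> \<le> T" using C0_inf_bounded[OF f] by blast
  have TB: "\<bar>fdiff k h f x\<bar> \<le> 2 ^ k * T" for h x by (intro fdiff_bound T)
  define S where "S = closure {x. f x \<noteq> 0}"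
  have cont: "continuous_on UNIV f" using f by (rule C0_inf_cont)
  have Sc: "compact S" using f by (simp add: C0_inf_def S_def)
  have Scl: "closed S" by (simp add: S_def)
  have Ssub: "{x. f x \<noteq> 0} \<subseteq> S" by (simp add: S_def closure_subset)
  have Sfin: "emeasure lborel S < \<infinity>"
    using Sc by (intro emeasure_bounded_finite compact_imp_bounded)
  define VS where "VS = measure lborel S"
  have VS: "emeasure lborel S = ennreal VS" using Sfin by (simp add: VS_def emeasure_eq_ennreal_measure less_top[symmetric]) 
  have VS0: "0 \<le> VS" by (simp add: VS_def)
  define C1 where "C1 = M powr p * (real (Suc k) * VS)"
  define C2 where "C2 = (2 ^ k * T) powr p * (real (Suc k) * VS)"
  have C1: "0 \<le> C1" "0 \<le> C2" using VS0 by (auto simp: C1_def C2_def)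
  define F1 where "F1 h = indicator (ball (0::'a) 1) h * ennreal (norm h powr (- (n + \<beta> * p - real k * p)))" for h
  define F2 where "F2 h = indicator (- ball (0::'a) 1) h * ennreal (norm h powr (- (n + \<beta> * p)))" for h
  have inner: "(\<integral>\<^sup>+x. ennreal (\<bar>fdiff k h f x\<bar> powr p) \<partial>lborel) \<le> ennreal (B powr p * (real (Suc k) * VS))"
    if "\<And>x. \<bar>fdiff k h f x\<bar> \<le> B" "0 \<le> B" for h B
  proof -
    have "(\<integral>\<^sup>+x. ennreal (\<bar>fdiff k h f x\<bar> powr p) \<partial>lborel) \<le> ennreal (B powr p) * (of_nat (Suc k) * emeasure lborel S)"
      by (rule inner_bound[OF cont Scl Ssub that(1) p])
    also have "\<dots> = ennreal (B powr p * (real (Suc k) * VS))"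
      using VS0 by (simp add: VS ennreal_mult'' ennreal_of_nat_eq_real_of_nat)
    finally show ?thesis .
  qed
  have pw: "(\<integral>\<^sup>+x. ennreal (\<bar>fdiff k h f x\<bar> powr p) \<partial>lborel) * ennreal (norm h powr e0)
      \<le> ennreal C1 * F1 h + ennreal C2 * F2 h" for h
  proof (cases "h \<in> ball 0 1")
    case True
    show ?thesis
    proof (cases "h = 0")
      case True then show ?thesis by (simp add: e0_def)
    next
      case False
      then have hp: "0 < norm h" by simp
      have "(\<integral>\<^sup>+x. ennreal (\<bar>fdiff k h f x\<bar> powr p) \<partial>lborel) * ennreal (norm h powr e0)
          \<le> ennreal ((M * norm h ^ k) powr p * (real (Suc k) * VS)) * ennreal (norm h powr e0)"
        by (intro mult_right_mono inner M) (use M00 in auto)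
      also have "\<dots> = ennreal ((M * norm h ^ k) powr p * (real (Suc k) * VS) * norm h powr e0)"
        using VS0 M00 by (simp add: ennreal_mult'')
      also have "(M * norm h ^ k) powr p * (real (Suc k) * VS) * norm h powr e0
          = C1 * norm h powr (- (n + \<beta> * p - real k * p))"
      proof -
        have "(M * norm h ^ k) powr p = M powr p * norm h powr (real k * p)"
          using hp M00 by (simp add: powr_mult powr_realpow[symmetric] powr_powr)
        moreover have "norm h powr (real k * p) * norm h powr e0 = norm h powr (- (n + \<beta> * p - real k * p))"
          by (simp add: powr_add[symmetric] e0_def algebra_simps)
        ultimately show ?thesis by (simp add: C1_def mult_ac)
      qed
      also have "ennreal (C1 * norm h powr (- (n + \<beta> * p - real k * p))) = ennreal C1 * F1 h"
        using True C1 by (simp add: F1_def ennreal_mult'')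
      also have "\<dots> \<le> ennreal C1 * F1 h + ennreal C2 * F2 h" by simp
      finally show ?thesis .
    qed
  next
    case False
    have "(\<integral>\<^sup>+x. ennreal (\<bar>fdiff k h f x\<bar> powr p) \<partial>lborel) * ennreal (norm h powr e0)
        \<le> ennreal ((2 ^ k * T) powr p * (real (Suc k) * VS)) * ennreal (norm h powr e0)"
      by (intro mult_right_mono inner TB) (use T in auto)
    also have "\<dots> = ennreal C2 * F2 h" using False by (simp add: C2_def F2_def e0_def)
    also have "\<dots> \<le> ennreal C1 * F1 h + ennreal C2 * F2 h" by simp
    finally show ?thesis .
  qed
  have ballm[measurable]: "ball (0::'a) 1 \<in> sets borel" by simp
  have F1m: "F1 \<in> borel_measurable lborel" unfolding F1_def by measurable
  have F2m: "F2 \<in> borel_measurable lborel" unfolding F2_def by measurable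
  have "(\<integral>\<^sup>+ h. (\<integral>\<^sup>+x. ennreal (\<bar>fdiff k h f x\<bar> powr p) \<partial>lborel) * ennreal (norm h powr e0) \<partial>lborel)
      \<le> (\<integral>\<^sup>+ h. ennreal C1 * F1 h + ennreal C2 * F2 h \<partial>lborel)"
    by (intro nn_integral_mono pw)
  also have "\<dots> = ennreal C1 * integral\<^sup>N lborel F1 + ennreal C2 * integral\<^sup>N lborel F2"
    using F1m F2m by (simp add: nn_integral_add nn_integral_cmult)
  also have "\<dots> < \<infinity>"
  proof -
    have "integral\<^sup>N lborel F1 < \<infinity>" unfolding F1_def n_def
      by (rule ball_int_finite) (use kb p in \<open>simp add: algebra_simps\<close>)
    moreover have "integral\<^sup>N lborel F2 < \<infinity>" unfolding F2_def n_def
      by (rule out_int_finite) (use b p in simp)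
    ultimately show ?thesis by (simp add: ennreal_mult_less_top)
  qed
  finally show ?thesis unfolding k_def e0_def n_def .
qed

locale lvl =
  fixes f :: "'a::euclidean_space \<Rightarrow> real" and T lam :: real
  assumes cont: "continuous_on UNIV f" and Tpos: "0 < T" and Tb: "\<And>x. \<bar>f x\<bar> \<le> T"
    and lam: "1 < lam" and supp: "compact (closure {x. f x \<noteq> 0})"
begin

definition s :: "nat \<Rightarrow> real" where "s i = T * (1 / lam) ^ i"
definition a :: "nat \<Rightarrow> real" where "a i = measure lborel (level_set f (s i))"
definition S where "S = closure {x. f x \<noteq> 0}"

lemma s_pos: "0 < s i" using Tpos lam by (simp add: s_def)
lemma s_Suc: "s (Suc i) = s i / lam" by (simp add: s_def)
lemma s_Suc': "s i = lam * s (Suc i)" using lam by (simp add: s_def)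
lemma s_0: "s 0 = T" by (simp add: s_def)
lemma s_less: "s (Suc i) < s i" using s_pos[of i] lam by (simp add: s_Suc field_simps)
lemma s_antimono: "i \<le> j \<Longrightarrow> s j \<le> s i"
  unfolding s_def using Tpos lam by (intro mult_left_mono power_decreasing) auto
lemma s_strict: "i < j \<Longrightarrow> s j < s i"
  unfolding s_def using Tpos lam by (intro mult_strict_left_mono power_strict_decreasing) auto

lemma open_level: "open (level_set f t)"
  unfolding level_set_def using cont by (intro open_Collect_less) (auto intro!: continuous_intros)

lemma level_meas[measurable]: "level_set f t \<in> sets lborel"
  using open_level by simp

lemma S_fin: "emeasure lborel S < \<infinity>"
  using supp unfolding S_def by (intro emeasure_bounded_finite compact_imp_bounded)

lemma level_sub: "0 \<le> t \<Longrightarrow> level_set f t \<subseteq> S"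
  unfolding level_set_def S_def using closure_subset by fastforce

lemma level_fmeas: "0 \<le> t \<Longrightarrow> level_set f t \<in> fmeasurable lborel"
  using level_sub S_fin emeasure_mono[of "level_set f t" S lborel] level_meas[of t]
  by (intro fmeasurableI) (auto simp: S_def simp del: sets_lborel)

lemma level_emeasure: "0 \<le> t \<Longrightarrow> emeasure lborel (level_set f t) = ennreal (measure lborel (level_set f t))"
  using level_fmeas by (simp add: emeasure_eq_measure2)

lemma level_anti:
  assumes "0 \<le> t1" "t1 \<le> t2"
  shows "measure lborel (level_set f t2) \<le> measure lborel (level_set f t1)"
proof (rule measure_mono_fmeasurable)
  show "level_set f t2 \<subseteq> level_set f t1" using assms by (auto simp: level_set_def)
  show "level_set f t2 \<in> sets lborel" by (rule level_meas)
  show "level_set f t1 \<in> fmeasurable lborel" by (rule level_fmeas) fact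
qed

lemma level_big:
  assumes "T \<le> t" shows "level_set f t = {}"
proof -
  have "\<not> t < \<bar>f x\<bar>" for x using Tb[of x] assms by linarith
  then show ?thesis by (auto simp: level_set_def)
qed

definition VS where "VS = measure lborel S"

lemma a_nonneg: "0 \<le> a i" by (simp add: a_def)
lemma a_mono: "a i \<le> a (Suc i)"
  unfolding a_def using s_pos s_less by (intro level_anti) (auto intro: less_imp_le)
lemma a_mono': "i \<le> j \<Longrightarrow> a i \<le> a j"
  unfolding a_def using s_pos s_antimono by (intro level_anti) (auto intro: less_imp_le)
lemma a_bound: "a i \<le> VS"
  unfolding a_def VS_def using level_sub[of "s i"] s_pos[of i] S_fin
  by (intro measure_mono_fmeasurable) (auto simp: S_def intro!: fmeasurableI simp del: sets_lborel)

lemma level_pos: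
  assumes "x \<in> level_set f t" "0 \<le> t"
  shows "0 < measure lborel (level_set f t)"
proof -
  obtain e where e: "0 < e" "ball x e \<subseteq> level_set f t"
    using open_level assms(1) by (meson open_contains_ball)
  have "0 < emeasure lborel (ball x e)" using e(1) by (simp add: emeasure_ball)
  also have "\<dots> \<le> emeasure lborel (level_set f t)" using e(2) level_meas[of t] by (intro emeasure_mono) auto
  finally show ?thesis using level_emeasure[OF assms(2)] by simp
qed

lemma level_index:
  assumes "0 < t" "t \<le> T"
  shows "\<exists>i. s (Suc i) < t \<and> t \<le> s i"
proof -
  define j where "j = nat \<lfloor>log lam (T / t)\<rfloor>"
  have ge: "log lam (T / t) \<ge> 0" using assms lam by simp
  have "\<lfloor>log lam (T / t)\<rfloor> = int j" using ge by (simp add: j_def)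
  then have "lam powr (real j) \<le> T / t \<and> T / t < lam powr (real j + 1)"
    using assms lam floor_log_eq_powr_iff[of "T / t" lam "int j"] by simp
  then have "lam ^ j \<le> T / t \<and> T / t < lam ^ Suc j"
    using lam by (simp add: powr_realpow powr_add mult.commute)
  then have "s (Suc j) < t \<and> t \<le> s j"
    using assms lam by (simp add: s_def power_one_over field_simps)
  then show ?thesis by blast
qed

lemma s_powr: "s i powr p = T powr p * ((1 / lam) powr p) ^ i"
  using Tpos lam by (simp add: s_def powr_mult powr_realpow[symmetric] powr_powr powr_power mult.commute)

end

context lvl begin

definition cc :: "real \<Rightarrow> real \<Rightarrow> nat \<Rightarrow> real" where
  "cc p e1 i = s i powr p * a i powr e1"

lemma cc_summable:
  assumes "0 < e1" "e1 < 1" "0 < p"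
  shows "summable (cc p e1)"
proof -
  have r1: "0 < (1/lam) powr p" using lam by simp
  have "(1/lam) powr p < 1 powr p" using lam assms by (intro powr_less_mono2) auto
  then have r: "0 < (1/lam) powr p" "(1/lam) powr p < 1" using r1 by auto
  have "summable (\<lambda>i. T powr p * ((1/lam) powr p) ^ i * a i powr (1 - (1 - e1)))"
    by (rule seq_comb(1)[where a=a and V=VS, OF a_nonneg a_mono a_bound r]) (use assms in auto)
  moreover have "cc p e1 = (\<lambda>i. T powr p * ((1/lam) powr p) ^ i * a i powr e1)"
    by (rule ext) (simp add: cc_def s_powr)
  ultimately show ?thesis by simp
qed

lemma cc_nonneg: "0 \<le> cc p e1 i" by (simp add: cc_def)

lemma mid_upper:
  assumes p: "1 \<le> p" and e: "0 < e1" "e1 < 1"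
  shows "(\<integral>\<^sup>+t. indicator {0<..} t * ennreal (p * t powr (p - 1) * measure lborel (level_set f t) powr e1) \<partial>lborel)
     \<le> ennreal (p * lam powr p * suminf (cc p e1))"
proof -
  define I where "I i = {s (Suc i)<..s i}" for i
  define g where "g i = p * s i powr (p - 1) * a (Suc i) powr e1" for i
  have Im[measurable]: "I i \<in> sets lborel" for i by (simp add: I_def)
  have pw: "indicator {0<..} t * ennreal (p * t powr (p - 1) * measure lborel (level_set f t) powr e1)
      \<le> (\<Sum>i. ennreal (g i) * indicator (I i) t)" for t
  proof (cases "0 < t \<and> t \<le> T")
    case True
    then obtain i where i: "s (Suc i) < t" "t \<le> s i" using level_index by blast
    have tI: "t \<in> I i" using i by (simp add: I_def)
    have "t powr (p - 1) \<le> s i powr (p - 1)" using i True p by (intro powr_mono2) auto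
    moreover have "measure lborel (level_set f t) powr e1 \<le> a (Suc i) powr e1"
      unfolding a_def using i e s_pos[of "Suc i"] by (intro powr_mono2 level_anti) auto
    ultimately have "p * t powr (p - 1) * measure lborel (level_set f t) powr e1 \<le> g i"
      unfolding g_def using p by (intro mult_mono) auto
    then have "indicator {0<..} t * ennreal (p * t powr (p - 1) * measure lborel (level_set f t) powr e1)
        \<le> ennreal (g i) * indicator (I i) t" using True tI by (simp add: ennreal_leI)
    also have "\<dots> \<le> (\<Sum>i. ennreal (g i) * indicator (I i) t)" by (rule ennreal_term_le_suminf)
    finally show ?thesis .
  next
    case False
    then consider "t \<le> 0" | "T < t" by linarith
    then show ?thesis
    proof cases
      case 1 then show ?thesis by simp
    next
      case 2 then show ?thesis using level_big[of t] by simp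
    qed
  qed
  have "(\<integral>\<^sup>+t. indicator {0<..} t * ennreal (p * t powr (p - 1) * measure lborel (level_set f t) powr e1) \<partial>lborel)
      \<le> (\<integral>\<^sup>+t. (\<Sum>i. ennreal (g i) * indicator (I i) t) \<partial>lborel)"
    by (intro nn_integral_mono pw)
  also have "\<dots> = (\<Sum>i. \<integral>\<^sup>+t. ennreal (g i) * indicator (I i) t \<partial>lborel)"
    by (intro nn_integral_suminf) measurable
  also have "\<dots> = (\<Sum>i. ennreal (g i) * emeasure lborel (I i))"
    by (simp only: nn_integral_cmult_indicator[OF Im])
  also have "\<dots> \<le> (\<Sum>i. ennreal (p * lam powr p * cc p e1 (Suc i)))"
  proof (intro suminf_le summableI)
    fix i
    have le: "s (Suc i) \<le> s i" using s_less[of i] by simp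
    have "ennreal (g i) * emeasure lborel (I i) = ennreal (g i * (s i - s (Suc i)))"
      using le by (simp add: I_def g_def ennreal_mult'')
    also have "g i * (s i - s (Suc i)) \<le> p * lam powr p * cc p e1 (Suc i)"
    proof -
      have "s i powr (p - 1) * (s i - s (Suc i)) \<le> s i powr (p - 1) * s i"
        using s_pos[of "Suc i"] by (intro mult_left_mono) auto
      also have "\<dots> = s i powr p" using s_pos[of i] by (simp add: powr_diff)
      also have "\<dots> = lam powr p * s (Suc i) powr p"
        using s_pos lam by (simp add: s_Suc'[of i] powr_mult)
      finally have "s i powr (p - 1) * (s i - s (Suc i)) \<le> lam powr p * s (Suc i) powr p" .
      then have "p * (s i powr (p - 1) * (s i - s (Suc i))) * a (Suc i) powr e1
          \<le> p * (lam powr p * s (Suc i) powr p) * a (Suc i) powr e1"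
        using p by (intro mult_right_mono mult_left_mono) auto
      then show ?thesis by (simp add: g_def cc_def mult_ac)
    qed
    finally show "ennreal (g i) * emeasure lborel (I i) \<le> ennreal (p * lam powr p * cc p e1 (Suc i))"
      by (simp add: ennreal_leI)
  qed
  also have "\<dots> = ennreal (p * lam powr p * (\<Sum>i. cc p e1 (Suc i)))"
  proof -
    have sm: "summable (\<lambda>i. cc p e1 (Suc i))" using cc_summable[of e1 p] e p
      by (simp add: summable_Suc_iff)
    then have "summable (\<lambda>i. p * lam powr p * cc p e1 (Suc i))" by (intro summable_mult)
    then have "(\<Sum>i. ennreal (p * lam powr p * cc p e1 (Suc i))) = ennreal (\<Sum>i. p * lam powr p * cc p e1 (Suc i))"
      using p by (intro suminf_ennreal2) (auto simp: cc_nonneg)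
    also have "(\<Sum>i. p * lam powr p * cc p e1 (Suc i)) = p * lam powr p * (\<Sum>i. cc p e1 (Suc i))"
      using sm by (rule suminf_mult)
    finally show ?thesis .
  qed
  also have "\<dots> \<le> ennreal (p * lam powr p * suminf (cc p e1))"
  proof -
    have "(\<Sum>i. cc p e1 (Suc i)) \<le> suminf (cc p e1)"
      using cc_summable[of e1 p] e p by (subst suminf_split_head) (auto simp: cc_nonneg)
    then show ?thesis using p by (intro ennreal_leI mult_left_mono) auto
  qed
  finally show ?thesis .
qed

lemma mid_lower:
  assumes p: "1 \<le> p" and e: "0 < e1" "e1 < 1"
  shows "ennreal (p * (lam - 1) * lam powr (- p) * suminf (cc p e1))
     \<le> (\<integral>\<^sup>+t. indicator {0<..} t * ennreal (p * t powr (p - 1) * measure lborel (level_set f t) powr e1) \<partial>lborel)"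
proof -
  define I where "I i = {s (Suc i)<..s i}" for i
  define g where "g i = p * s (Suc i) powr (p - 1) * a i powr e1" for i
  have Im[measurable]: "I i \<in> sets lborel" for i by (simp add: I_def)
  have pw: "(\<Sum>i. ennreal (g i) * indicator (I i) t) \<le>
      indicator {0<..} t * ennreal (p * t powr (p - 1) * measure lborel (level_set f t) powr e1)" for t
  proof (cases "\<exists>i. t \<in> I i")
    case True
    then obtain i where tI: "t \<in> I i" by blast
    then have i: "s (Suc i) < t" "t \<le> s i" by (auto simp: I_def)
    have t0: "0 < t" using i s_pos[of "Suc i"] by linarith
    have dis: "j = i" if "t \<in> I j" for j
    proof (rule ccontr)
      assume "j \<noteq> i"
      then consider "j < i" | "i < j" by linarith
      then show False
      proof cases
        case 1 then have "s i \<le> s (Suc j)" by (intro s_antimono) auto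
        then show False using that i by (auto simp: I_def)
      next
        case 2 then have "s j \<le> s (Suc i)" by (intro s_antimono) auto
        then show False using that i by (auto simp: I_def)
      qed
    qed
    have "(\<Sum>j. ennreal (g j) * indicator (I j) t) = (\<Sum>j\<in>{i}. ennreal (g j) * indicator (I j) t)"
      by (rule suminf_finite) (use dis in \<open>auto simp: indicator_def\<close>)
    also have "\<dots> = ennreal (g i)" using tI by simp
    also have "\<dots> \<le> indicator {0<..} t * ennreal (p * t powr (p - 1) * measure lborel (level_set f t) powr e1)"
    proof -
      have "s (Suc i) powr (p - 1) \<le> t powr (p - 1)" using i s_pos[of "Suc i"] p by (intro powr_mono2) auto
      moreover have "a i powr e1 \<le> measure lborel (level_set f t) powr e1"
        unfolding a_def using i e t0 a_nonneg[of i] unfolding a_def by (intro powr_mono2 level_anti) auto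
      ultimately have "g i \<le> p * t powr (p - 1) * measure lborel (level_set f t) powr e1"
        unfolding g_def using p by (intro mult_mono) auto
      then show ?thesis using t0 by (simp add: ennreal_leI)
    qed
    finally show ?thesis .
  next
    case False
    then show ?thesis by (simp add: indicator_def)
  qed
  have "ennreal (p * (lam - 1) * lam powr (- p) * suminf (cc p e1)) = (\<Sum>i. ennreal (p * (lam - 1) * lam powr (- p) * cc p e1 i))"
  proof -
    have sm: "summable (cc p e1)" using cc_summable[of e1 p] e p by simp
    have "(\<Sum>i. ennreal (p * (lam - 1) * lam powr (- p) * cc p e1 i)) = ennreal (\<Sum>i. p * (lam - 1) * lam powr (- p) * cc p e1 i)"
      using p lam sm by (intro suminf_ennreal2 summable_mult) (auto simp: cc_nonneg)
    also have "(\<Sum>i. p * (lam - 1) * lam powr (- p) * cc p e1 i) = p * (lam - 1) * lam powr (- p) * suminf (cc p e1)"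
      using sm by (rule suminf_mult)
    finally show ?thesis by simp
  qed
  also have "\<dots> = (\<Sum>i. ennreal (g i) * emeasure lborel (I i))"
  proof -
    have "p * (lam - 1) * lam powr (- p) * cc p e1 i = g i * (s i - s (Suc i))" for i
    proof -
      have sp: "0 < s (Suc i)" by (rule s_pos)
      have "s i - s (Suc i) = (lam - 1) * s (Suc i)" by (simp add: s_Suc'[of i] algebra_simps)
      moreover have "s (Suc i) powr (p - 1) * s (Suc i) = s (Suc i) powr p" using sp by (simp add: powr_diff)
      moreover have "s (Suc i) powr p = lam powr (- p) * s i powr p"
        using sp lam by (simp add: s_Suc'[of i] powr_mult powr_minus)
      ultimately show ?thesis by (simp add: g_def cc_def algebra_simps)
    qed
    moreover have "ennreal (g i) * emeasure lborel (I i) = ennreal (g i * (s i - s (Suc i)))" for i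
      using s_less[of i] by (simp add: I_def g_def ennreal_mult'')
    ultimately show ?thesis by simp
  qed
  also have "\<dots> = (\<Sum>i. \<integral>\<^sup>+t. ennreal (g i) * indicator (I i) t \<partial>lborel)"
    by (simp only: nn_integral_cmult_indicator[OF Im])
  also have "\<dots> = (\<integral>\<^sup>+t. (\<Sum>i. ennreal (g i) * indicator (I i) t) \<partial>lborel)"
    by (intro nn_integral_suminf[symmetric]) measurable
  also have "\<dots> \<le> (\<integral>\<^sup>+t. indicator {0<..} t * ennreal (p * t powr (p - 1) * measure lborel (level_set f t) powr e1) \<partial>lborel)"
    by (intro nn_integral_mono pw)
  finally show ?thesis .
qed

lemma lhs_upper:
  assumes p: "1 \<le> p" and e: "0 < e1" "e1 < 1" and q: "q = p / e1"
  shows "(\<integral>\<^sup>+x. ennreal (\<bar>f x\<bar> powr q) \<partial>lborel) \<le> ennreal (lam powr q * suminf (cc p e1) powr (q / p))"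
proof -
  define X where "X = suminf (cc p e1)"
  have sm: "summable (cc p e1)" using cc_summable[of e1 p] e p by simp
  have X0: "0 \<le> X" unfolding X_def using sm by (intro suminf_nonneg) (auto simp: cc_nonneg)
  have q0: "0 < q" using q p e by simp
  have "p * e1 \<le> p * 1" using p e by (intro mult_left_mono) auto
  then have "p \<le> q" using e by (simp add: q le_divide_eq)
  then have r1: "1 \<le> q / p" using p by simp
  have cX: "cc p e1 i \<le> X" for i unfolding X_def using sm
    by (intro sum_le_suminf[of _ "{i}", simplified]) (auto simp: cc_nonneg)
  have pw: "ennreal (\<bar>f x\<bar> powr q) \<le> (\<Sum>i. ennreal (s i powr q) * indicator (level_set f (s (Suc i))) x)" for x
  proof (cases "f x = 0")
    case True then show ?thesis by simp
  next
    case False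
    then obtain i where i: "s (Suc i) < \<bar>f x\<bar>" "\<bar>f x\<bar> \<le> s i" using level_index[of "\<bar>f x\<bar>"] Tb[of x] by auto
    have "ennreal (\<bar>f x\<bar> powr q) \<le> ennreal (s i powr q) * indicator (level_set f (s (Suc i))) x"
      using i q0 by (auto simp: level_set_def intro!: ennreal_leI powr_mono2)
    also have "\<dots> \<le> (\<Sum>i. ennreal (s i powr q) * indicator (level_set f (s (Suc i))) x)" by (rule ennreal_term_le_suminf)
    finally show ?thesis .
  qed
  have "(\<integral>\<^sup>+x. ennreal (\<bar>f x\<bar> powr q) \<partial>lborel) \<le> (\<integral>\<^sup>+x. (\<Sum>i. ennreal (s i powr q) * indicator (level_set f (s (Suc i))) x) \<partial>lborel)"
    by (intro nn_integral_mono pw)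
  also have "\<dots> = (\<Sum>i. \<integral>\<^sup>+x. ennreal (s i powr q) * indicator (level_set f (s (Suc i))) x \<partial>lborel)"
    by (intro nn_integral_suminf) measurable
  also have "\<dots> = (\<Sum>i. ennreal (s i powr q) * emeasure lborel (level_set f (s (Suc i))))"
    by (simp only: nn_integral_cmult_indicator[OF level_meas])
  also have "\<dots> = (\<Sum>i. ennreal (lam powr q * cc p e1 (Suc i) powr (q / p)))"
  proof -
    have "ennreal (s i powr q) * emeasure lborel (level_set f (s (Suc i))) = ennreal (lam powr q * cc p e1 (Suc i) powr (q / p))" for i
    proof -
      have sp: "0 < s (Suc i)" by (rule s_pos)
      have "emeasure lborel (level_set f (s (Suc i))) = ennreal (a (Suc i))"
        using level_emeasure[of "s (Suc i)"] sp by (simp add: a_def)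
      moreover have "cc p e1 (Suc i) powr (q / p) = s (Suc i) powr q * a (Suc i)"
      proof -
        have "cc p e1 (Suc i) powr (q / p) = (s (Suc i) powr p) powr (q / p) * (a (Suc i) powr e1) powr (q / p)"
          unfolding cc_def by (simp add: powr_mult)
        also have "(s (Suc i) powr p) powr (q / p) = s (Suc i) powr q" using p by (simp add: powr_powr)
        also have "(a (Suc i) powr e1) powr (q / p) = a (Suc i)"
          using p e q a_nonneg[of "Suc i"] by (simp add: powr_powr powr_one)
        finally show ?thesis .
      qed
      moreover have "s i powr q = lam powr q * s (Suc i) powr q"
        using sp lam by (simp add: s_Suc'[of i] powr_mult)
      ultimately show ?thesis using a_nonneg[of "Suc i"] by (simp add: ennreal_mult'' mult_ac)
    qed
    then show ?thesis by simp
  qed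
  also have "\<dots> \<le> (\<Sum>i. ennreal (lam powr q * X powr (q / p - 1) * cc p e1 (Suc i)))"
  proof (intro suminf_le summableI ennreal_leI)
    fix i
    have "cc p e1 (Suc i) powr (q / p) = cc p e1 (Suc i) powr ((q / p - 1) + 1)" by simp
    also have "\<dots> = cc p e1 (Suc i) powr (q / p - 1) * cc p e1 (Suc i) powr 1"
      by (rule powr_add)
    also have "\<dots> \<le> X powr (q / p - 1) * cc p e1 (Suc i)"
      using cX[of "Suc i"] r1 cc_nonneg[of p e1 "Suc i"] by (auto intro!: mult_right_mono powr_mono2)
    finally show "lam powr q * cc p e1 (Suc i) powr (q / p) \<le> lam powr q * X powr (q / p - 1) * cc p e1 (Suc i)"
      by (simp add: mult.assoc mult_left_mono)
  qed
  also have "\<dots> = ennreal (lam powr q * X powr (q / p - 1) * (\<Sum>i. cc p e1 (Suc i)))"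
  proof -
    have sm1: "summable (\<lambda>i. cc p e1 (Suc i))" using sm by (simp add: summable_Suc_iff)
    have "(\<Sum>i. ennreal (lam powr q * X powr (q / p - 1) * cc p e1 (Suc i))) = ennreal (\<Sum>i. lam powr q * X powr (q / p - 1) * cc p e1 (Suc i))"
      using sm1 by (intro suminf_ennreal2 summable_mult) (auto simp: cc_nonneg)
    also have "(\<Sum>i. lam powr q * X powr (q / p - 1) * cc p e1 (Suc i)) = lam powr q * X powr (q / p - 1) * (\<Sum>i. cc p e1 (Suc i))"
      using sm1 by (rule suminf_mult)
    finally show ?thesis .
  qed
  also have "\<dots> \<le> ennreal (lam powr q * X powr (q / p - 1) * X)"
  proof -
    have "(\<Sum>i. cc p e1 (Suc i)) \<le> X"
      unfolding X_def using sm by (subst suminf_split_head) (auto simp: cc_nonneg)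
    then show ?thesis by (intro ennreal_leI mult_left_mono) auto
  qed
  also have "lam powr q * X powr (q / p - 1) * X = lam powr q * X powr (q / p)"
  proof (cases "X = 0")
    case True then show ?thesis by simp
  next
    case False then have "0 < X" using X0 by simp
    then show ?thesis by (simp add: powr_diff)
  qed
  finally show ?thesis by (simp add: X_def)
qed

end

lemma emeasure_dilate_le:
  fixes A :: "'a::euclidean_space set" and x :: 'a
  assumes A: "A \<in> sets borel" and c: "1 \<le> c"
  shows "emeasure lborel ((\<lambda>h. x + c *\<^sub>R h) -` A) \<le> emeasure lborel A"
proof -
  have c0: "c \<noteq> 0" using c by auto
  have m: "(\<lambda>h::'a. x + c *\<^sub>R h) \<in> borel_measurable borel" by simp
  have "emeasure lborel A = emeasure (density (distr lborel borel (\<lambda>h. x + c *\<^sub>R h)) (\<lambda>_. ennreal (\<bar>c\<bar> ^ DIM('a)))) A"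
    using lborel_affine[OF c0, of x] by simp
  also have "\<dots> = (\<integral>\<^sup>+ y. ennreal (\<bar>c\<bar> ^ DIM('a)) * indicator A y \<partial>distr lborel borel (\<lambda>h. x + c *\<^sub>R h))"
    using A by (intro emeasure_density) auto
  also have "\<dots> = ennreal (\<bar>c\<bar> ^ DIM('a)) * emeasure (distr lborel borel (\<lambda>h. x + c *\<^sub>R h)) A"
    using A by (intro nn_integral_cmult_indicator) auto
  also have "emeasure (distr lborel borel (\<lambda>h. x + c *\<^sub>R h)) A = emeasure lborel ((\<lambda>h. x + c *\<^sub>R h) -` A)"
    using A m by (subst emeasure_distr) auto
  finally have eq: "emeasure lborel A = ennreal (\<bar>c\<bar> ^ DIM('a)) * emeasure lborel ((\<lambda>h. x + c *\<^sub>R h) -` A)" .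
  have "1 \<le> \<bar>c\<bar> ^ DIM('a)" using c by (simp add: one_le_power)
  then have "ennreal 1 \<le> ennreal (\<bar>c\<bar> ^ DIM('a))" by (rule ennreal_leI)
  then have "1 * emeasure lborel ((\<lambda>h. x + c *\<^sub>R h) -` A) \<le> ennreal (\<bar>c\<bar> ^ DIM('a)) * emeasure lborel ((\<lambda>h. x + c *\<^sub>R h) -` A)"
    by (intro mult_right_mono) auto
  then have "emeasure lborel ((\<lambda>h. x + c *\<^sub>R h) -` A) \<le> ennreal (\<bar>c\<bar> ^ DIM('a)) * emeasure lborel ((\<lambda>h. x + c *\<^sub>R h) -` A)"
    by simp
  then show ?thesis using eq by simp
qed

lemma ennreal_sub_bound:
  fixes E F :: ennreal
  assumes "ennreal (2 * v) \<le> E + F" "F \<le> ennreal v" "0 \<le> v"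
  shows "ennreal v \<le> E"
proof -
  have eq: "ennreal (2 * v) = ennreal v + ennreal v" using assms(3) by (simp add: ennreal_plus[symmetric])
  have h1: "ennreal v + ennreal v \<le> E + F" using assms(1) unfolding eq .
  have "ennreal v + ennreal v \<le> E + ennreal v" by (rule order_trans[OF h1 add_left_mono[OF assms(2)]])
  then show ?thesis using ennreal_add_left_cancel_le[of "ennreal v" "ennreal v" E] by (simp add: add.commute)
qed

context lvl begin

lemma H_lower:
  fixes k :: nat and \<beta> p :: real and x :: 'a and m :: nat
  assumes k: "1 \<le> k" and lamk: "2 ^ Suc k \<le> lam" and p: "1 \<le> p" and b: "0 < \<beta>"
    and x: "s (Suc m) < \<bar>f x\<bar>"
  shows "ennreal (2 powr (- p) * real k * (2 * real k / unit_ball_vol (real DIM('a))) powr (- (1 + \<beta> * p / real DIM('a)))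
            * s (Suc m) powr p * a (Suc (Suc m)) powr (- (\<beta> * p / real DIM('a))))
     \<le> (\<integral>\<^sup>+h. ennreal (\<bar>fdiff k h f x\<bar> powr p) * ennreal (norm h powr (- (real DIM('a) + \<beta> * p))) \<partial>lborel)"
proof -
  define n where "n = real DIM('a)"
  define \<gamma> where "\<gamma> = \<beta> * p / n"
  define \<omega> where "\<omega> = unit_ball_vol n"
  define e0 where "e0 = - (n + \<beta> * p)"
  define A' where "A' = level_set f (s (Suc (Suc m)))"
  define \<alpha> where "\<alpha> = a (Suc (Suc m))"
  have n0: "0 < n" by (simp add: n_def)
  have \<omega>0: "0 < \<omega>" unfolding \<omega>_def using n0 by simp
  have xA: "x \<in> A'" using x s_less[of "Suc m"] by (simp add: A'_def level_set_def)
  have \<alpha>0: "0 < \<alpha>" unfolding \<alpha>_def a_def using level_pos[OF xA[unfolded A'_def]] s_pos by (simp add: less_imp_le)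
  define \<rho> where "\<rho> = (2 * real k * \<alpha> / \<omega>) powr (1 / n)"
  have \<rho>0: "0 < \<rho>" unfolding \<rho>_def using k \<alpha>0 \<omega>0 by simp
  have \<rho>n: "\<rho> ^ DIM('a) = 2 * real k * \<alpha> / \<omega>"
  proof -
    have "\<rho> ^ DIM('a) = \<rho> powr n" using \<rho>0 by (simp add: powr_realpow n_def)
    also have "\<dots> = 2 * real k * \<alpha> / \<omega>" unfolding \<rho>_def using n0 k \<alpha>0 \<omega>0 by (simp add: powr_powr)
    finally show ?thesis .
  qed
  define F where "F = (\<Union>j\<in>{1..k}. (\<lambda>h. x + real j *\<^sub>R h) -` A')"
  have A'm: "A' \<in> sets borel" unfolding A'_def using level_meas by simp
  have prem: "(\<lambda>h. x + real j *\<^sub>R h) -` A' \<in> sets lborel" for j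
  proof -
    have "(\<lambda>h::'a. x + real j *\<^sub>R h) \<in> borel_measurable borel" by simp
    from measurable_sets_borel[OF this A'm] show ?thesis by simp
  qed
  have Fm: "F \<in> sets lborel" unfolding F_def using prem by auto
  have EF: "emeasure lborel F \<le> ennreal (real k * \<alpha>)"
  proof -
    have "emeasure lborel F \<le> (\<Sum>j\<in>{1..k}. emeasure lborel ((\<lambda>h. x + real j *\<^sub>R h) -` A'))"
      unfolding F_def by (intro emeasure_subadditive_finite) (use prem in auto)
    also have "\<dots> \<le> (\<Sum>j\<in>{1..k}. emeasure lborel A')"
      by (intro sum_mono emeasure_dilate_le A'm) auto
    also have "\<dots> = of_nat k * ennreal \<alpha>"
      using level_emeasure[of "s (Suc (Suc m))"] s_pos by (simp add: A'_def \<alpha>_def a_def less_imp_le)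
    also have "\<dots> = ennreal (real k * \<alpha>)" using \<alpha>0 by (simp add: ennreal_mult'' ennreal_of_nat_eq_real_of_nat)
    finally show ?thesis .
  qed
  have Eball: "emeasure lborel (ball (0::'a) \<rho>) = ennreal (2 * (real k * \<alpha>))"
    using \<rho>0 \<omega>0 by (simp add: emeasure_ball \<rho>n \<omega>_def[symmetric] n_def[symmetric] mult.assoc)
  have EBF: "ennreal (real k * \<alpha>) \<le> emeasure lborel (ball 0 \<rho> - F)"
  proof (rule ennreal_sub_bound[OF _ EF])
    have "emeasure lborel (ball (0::'a) \<rho>) \<le> emeasure lborel ((ball 0 \<rho> - F) \<union> F)"
      using Fm by (intro emeasure_mono) auto
    also have "\<dots> \<le> emeasure lborel (ball 0 \<rho> - F) + emeasure lborel F"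
      using Fm by (intro emeasure_subadditive) auto
    finally show "ennreal (2 * (real k * \<alpha>)) \<le> emeasure lborel (ball 0 \<rho> - F) + emeasure lborel F"
      using Eball by simp
    show "0 \<le> real k * \<alpha>" using \<alpha>0 by simp
  qed
  define c0 where "c0 = (s (Suc m) / 2) powr p * \<rho> powr e0"
  have pw: "ennreal c0 * indicator (ball 0 \<rho> - F) h \<le> ennreal (\<bar>fdiff k h f x\<bar> powr p) * ennreal (norm h powr e0)" for h
  proof (cases "h \<in> ball 0 \<rho> - F")
    case True
    have h0: "h \<noteq> 0"
    proof
      assume "h = 0"
      then have "h \<in> F" using xA k unfolding F_def by (auto intro!: bexI[of _ 1])
      then show False using True by simp
    qed
    have hn: "0 < norm h" "norm h \<le> \<rho>" using h0 True by auto
    have fj: "\<bar>f (x + of_nat j *\<^sub>R h)\<bar> \<le> s (Suc (Suc m))" if "1 \<le> j" "j \<le> k" for j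
    proof -
      have "x + real j *\<^sub>R h \<notin> A'" using True that unfolding F_def by auto
      then show ?thesis by (simp add: A'_def level_set_def)
    qed
    have main: "\<bar>fdiff k h f x - (-1) ^ k * f x\<bar> \<le> (2 ^ k - 1) * s (Suc (Suc m))"
      by (rule fdiff_main) (use fj in auto)
    have ee: "2 ^ k * s (Suc (Suc m)) \<le> s (Suc m) / 2"
    proof -
      have "2 ^ k * s (Suc (Suc m)) = 2 ^ k * s (Suc m) / lam" by (simp add: s_Suc)
      also have "\<dots> \<le> 2 ^ k * s (Suc m) / 2 ^ Suc k"
        using lamk s_pos[of "Suc m"] lam by (intro divide_left_mono) auto
      also have "\<dots> = s (Suc m) / 2" by simp
      finally show ?thesis .
    qed
    have "\<bar>(-1) ^ k * f x\<bar> = \<bar>f x\<bar>" by (simp add: abs_mult)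
    then have fdlow: "s (Suc m) / 2 \<le> \<bar>fdiff k h f x\<bar>"
      using main ee x s_pos[of "Suc (Suc m)"] by (simp add: algebra_simps)
    have "(s (Suc m) / 2) powr p \<le> \<bar>fdiff k h f x\<bar> powr p"
      using fdlow s_pos[of "Suc m"] p by (intro powr_mono2) auto
    moreover have "\<rho> powr e0 \<le> norm h powr e0"
    proof -
      have "0 \<le> \<beta> * p" using b p by simp
      then have "e0 \<le> 0" using n0 by (simp add: e0_def)
      then show ?thesis using hn by (intro powr_mono2') auto
    qed
    ultimately have "c0 \<le> \<bar>fdiff k h f x\<bar> powr p * norm h powr e0"
      unfolding c0_def by (intro mult_mono) auto
    then show ?thesis using True by (simp add: ennreal_mult''[symmetric] ennreal_leI)
  next
    case False then show ?thesis by simp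
  qed
  have "ennreal (c0 * (real k * \<alpha>)) = ennreal c0 * ennreal (real k * \<alpha>)"
    using \<alpha>0 by (simp add: ennreal_mult'')
  also have "\<dots> \<le> ennreal c0 * emeasure lborel (ball 0 \<rho> - F)"
    by (intro mult_left_mono EBF) auto
  also have "\<dots> = (\<integral>\<^sup>+h. ennreal c0 * indicator (ball 0 \<rho> - F) h \<partial>lborel)"
    using Fm by (intro nn_integral_cmult_indicator[symmetric]) auto
  also have "\<dots> \<le> (\<integral>\<^sup>+h. ennreal (\<bar>fdiff k h f x\<bar> powr p) * ennreal (norm h powr e0) \<partial>lborel)"
    by (intro nn_integral_mono pw)
  finally have fin: "ennreal (c0 * (real k * \<alpha>)) \<le> (\<integral>\<^sup>+h. ennreal (\<bar>fdiff k h f x\<bar> powr p) * ennreal (norm h powr e0) \<partial>lborel)" .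
  have alg: "2 powr (- p) * real k * (2 * real k / \<omega>) powr (- (1 + \<gamma>)) * s (Suc m) powr p * \<alpha> powr (- \<gamma>)
      = c0 * (real k * \<alpha>)"
  proof -
    have r1: "\<rho> powr e0 = (2 * real k / \<omega>) powr (- (1 + \<gamma>)) * \<alpha> powr (- (1 + \<gamma>))"
    proof -
      have "\<rho> powr e0 = (2 * real k * \<alpha> / \<omega>) powr (- (1 + \<gamma>))"
      proof -
        have ex: "1 / n * e0 = - (1 + \<gamma>)" using n0 by (simp add: e0_def \<gamma>_def field_simps)
        show ?thesis unfolding \<rho>_def powr_powr ex ..
      qed
      also have "\<dots> = (2 * real k / \<omega>) powr (- (1 + \<gamma>)) * \<alpha> powr (- (1 + \<gamma>))"
        using k \<alpha>0 \<omega>0 by (simp add: powr_mult[symmetric])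
      finally show ?thesis .
    qed
    have r2: "\<alpha> * \<alpha> powr (- (1 + \<gamma>)) = \<alpha> powr (- \<gamma>)"
      using \<alpha>0 by (simp add: powr_add[symmetric] powr_minus_divide[symmetric] powr_diff)
    have r3: "(s (Suc m) / 2) powr p = 2 powr (- p) * s (Suc m) powr p"
      using s_pos[of "Suc m"] by (simp add: powr_divide powr_minus_divide)
    show ?thesis unfolding c0_def r1 r3 using r2 by (simp add: algebra_simps)
  qed
  have goal': "ennreal (2 powr (- p) * real k * (2 * real k / \<omega>) powr (- (1 + \<gamma>)) * s (Suc m) powr p * \<alpha> powr (- \<gamma>))
     \<le> (\<integral>\<^sup>+h. ennreal (\<bar>fdiff k h f x\<bar> powr p) * ennreal (norm h powr e0) \<partial>lborel)"
    unfolding alg by (rule fin)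
  then show ?thesis by (simp only: \<alpha>_def \<gamma>_def \<omega>_def n_def e0_def)
qed

end

lemma pair_meas:
  fixes f :: "'a::euclidean_space \<Rightarrow> real"
  assumes "continuous_on UNIV f"
  shows "(\<lambda>(x, h). ennreal (\<bar>fdiff k h f x\<bar> powr p) * ennreal (norm h powr e)) \<in> borel_measurable (lborel \<Otimes>\<^sub>M lborel)"
proof -
  have "continuous_on UNIV ((\<lambda>z. fdiff k (fst z) f (snd z)) o (\<lambda>z::'a \<times> 'a. (snd z, fst z)))"
    by (rule continuous_on_compose) (auto intro!: continuous_intros continuous_on_subset[OF fdiff_cont[OF assms]])
  then have c: "continuous_on UNIV (\<lambda>z::'a \<times> 'a. fdiff k (snd z) f (fst z))" by (simp add: o_def)
  have [measurable]: "(\<lambda>z::'a \<times> 'a. fdiff k (snd z) f (fst z)) \<in> borel_measurable borel"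
    by (rule borel_measurable_continuous_onI[OF c])
  have [measurable]: "(\<lambda>z::'a \<times> 'a. \<bar>fdiff k (snd z) f (fst z)\<bar> powr p) \<in> borel_measurable borel"
    by (rule measurable_abs_powr) measurable
  have [measurable]: "(\<lambda>z::'a \<times> 'a. norm (snd z) powr e) \<in> borel_measurable borel"
  proof (rule powr_real_measurable)
    show "(\<lambda>z::'a \<times> 'a. norm (snd z)) \<in> borel_measurable borel"
      by (intro borel_measurable_continuous_onI continuous_intros)
  qed simp
  have "(\<lambda>z::'a \<times> 'a. ennreal (\<bar>fdiff k (snd z) f (fst z)\<bar> powr p) * ennreal (norm (snd z) powr e)) \<in> borel_measurable borel"
    by measurable
  then show ?thesis by (simp add: lborel_prod case_prod_beta')
qed

context lvl begin

lemma u_bound: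
  fixes k :: nat and \<beta> p :: real
  assumes k: "1 \<le> k" and lamk: "2 ^ Suc k \<le> lam" and p: "1 \<le> p" and b: "0 < \<beta>"
    and bp: "\<beta> * p < real DIM('a)"
  defines "\<gamma> \<equiv> \<beta> * p / real DIM('a)"
  defines "r \<equiv> (1 / lam) powr p"
  defines "\<kappa> \<equiv> 2 powr (- p) * real k * (2 * real k / unit_ball_vol (real DIM('a))) powr (- (1 + \<gamma>))"
  shows "summable (\<lambda>i. T powr p * r ^ Suc i * a i * a (Suc i) powr (- \<gamma>))"
    "ennreal (\<Sum>i. T powr p * r ^ Suc i * a i * a (Suc i) powr (- \<gamma>))
     \<le> ennreal (r / ((1 - r) * \<kappa>)) * (\<integral>\<^sup>+x. (\<integral>\<^sup>+h. ennreal (\<bar>fdiff k h f x\<bar> powr p) * ennreal (norm h powr (- (real DIM('a) + \<beta> * p))) \<partial>lborel) \<partial>lborel)"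
proof -
  define u where "u i = T powr p * r ^ Suc i * a i * a (Suc i) powr (- \<gamma>)" for i
  define w where "w i = T powr p * r ^ Suc i * a (Suc i) powr (- \<gamma>)" for i
  define Hx where "Hx x = (\<integral>\<^sup>+h. ennreal (\<bar>fdiff k h f x\<bar> powr p) * ennreal (norm h powr (- (real DIM('a) + \<beta> * p))) \<partial>lborel)" for x
  define K where "K = r / ((1 - r) * \<kappa>)"
  have n0: "0 < real DIM('a)" by simp
  have g: "0 < \<gamma>" "\<gamma> < 1" using b p bp n0 by (auto simp: \<gamma>_def)
  have r1: "0 < r" using lam by (simp add: r_def)
  have "(1/lam) powr p < 1 powr p" using lam p by (intro powr_less_mono2) auto
  then have r2: "r < 1" by (simp add: r_def)
  have uv: "0 < unit_ball_vol (real DIM('a))" by simp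
  have q1: "0 < 2 * real k / unit_ball_vol (real DIM('a))" using k uv by (intro divide_pos_pos) auto
  have q2: "0 < (2 * real k / unit_ball_vol (real DIM('a))) powr (- (1 + \<gamma>))"
  proof -
    have ne: "2 * real k / unit_ball_vol (real DIM('a)) \<noteq> 0" using q1 by linarith
    show ?thesis using powr_gt_zero[of "2 * real k / unit_ball_vol (real DIM('a))" "- (1 + \<gamma>)"] ne by blast
  qed
  have q3: "0 < 2 powr (- p) * real k" using k by simp
  have \<kappa>0: "0 < \<kappa>" unfolding \<kappa>_def using q2 q3 by (rule mult_pos_pos[rotated])
  have K0: "0 \<le> K" using r1 r2 \<kappa>0 by (simp add: K_def)
  have su: "summable u"
    using seq_comb(2)[where a=a and V=VS, OF a_nonneg a_mono a_bound r1 r2 g] by (simp add: u_def[abs_def])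
  then show "summable (\<lambda>i. T powr p * r ^ Suc i * a i * a (Suc i) powr (- \<gamma>))" by (simp add: u_def[abs_def])
  have u0: "0 \<le> u i" for i using r1 a_nonneg by (simp add: u_def)
  have w0: "0 \<le> w i" for i using r1 by (simp add: w_def)
  have "ennreal (suminf u) = (\<Sum>i. ennreal (u i))"
    using su u0 by (intro suminf_ennreal2[symmetric]) auto
  also have "\<dots> = (\<Sum>i. \<integral>\<^sup>+x. ennreal (w i) * indicator (level_set f (s i)) x \<partial>lborel)"
  proof -
    have "ennreal (u i) = (\<integral>\<^sup>+x. ennreal (w i) * indicator (level_set f (s i)) x \<partial>lborel)" for i
    proof -
      have "(\<integral>\<^sup>+x. ennreal (w i) * indicator (level_set f (s i)) x \<partial>lborel) = ennreal (w i) * emeasure lborel (level_set f (s i))"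
        by (rule nn_integral_cmult_indicator[OF level_meas])
      also have "\<dots> = ennreal (w i) * ennreal (a i)"
        using level_emeasure[of "s i"] s_pos[of i] by (simp add: a_def)
      also have "\<dots> = ennreal (u i)" using w0 a_nonneg by (simp add: ennreal_mult''[symmetric] u_def w_def mult_ac)
      finally show ?thesis by simp
    qed
    then show ?thesis by simp
  qed
  also have "\<dots> = (\<integral>\<^sup>+x. (\<Sum>i. ennreal (w i) * indicator (level_set f (s i)) x) \<partial>lborel)"
    by (intro nn_integral_suminf[symmetric]) measurable
  also have "\<dots> \<le> (\<integral>\<^sup>+x. ennreal K * Hx x \<partial>lborel)"
  proof (intro nn_integral_mono)
    fix x
    show "(\<Sum>i. ennreal (w i) * indicator (level_set f (s i)) x) \<le> ennreal K * Hx x"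
    proof (cases "f x = 0")
      case True
      then have "ennreal (w i) * indicator (level_set f (s i)) x = 0" for i
        using s_pos[of i] by (simp add: level_set_def)
      then have "(\<Sum>i. ennreal (w i) * indicator (level_set f (s i)) x) = 0" by (simp only:) simp
      then show ?thesis by simp
    next
      case False
      then obtain m where m: "s (Suc m) < \<bar>f x\<bar>" "\<bar>f x\<bar> \<le> s m"
        using level_index[of "\<bar>f x\<bar>"] Tb[of x] by auto
      define \<alpha> where "\<alpha> = a (Suc (Suc m))"
      have xA: "x \<in> level_set f (s (Suc (Suc m)))" using m s_less[of "Suc m"] by (simp add: level_set_def)
      have \<alpha>0: "0 < \<alpha>" unfolding \<alpha>_def a_def using level_pos[OF xA] s_pos by (simp add: less_imp_le)
      define C where "C = \<alpha> powr (- \<gamma>) * T powr p * r ^ Suc (Suc m)"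
      define hh where "hh i = (if Suc m \<le> i then \<alpha> powr (- \<gamma>) * T powr p * r ^ Suc i else 0)" for i
      have step: "ennreal (w i) * indicator (level_set f (s i)) x \<le> ennreal (hh i)" for i
      proof (cases "Suc m \<le> i")
        case True
        have "a (Suc i) powr (- \<gamma>) \<le> \<alpha> powr (- \<gamma>)"
          unfolding \<alpha>_def using True g \<alpha>0 by (intro powr_mono2' a_mono') (auto simp: \<alpha>_def)
        then have "w i \<le> hh i" using True r1 by (simp add: w_def hh_def mult_ac mult_left_mono)
        then show ?thesis by (simp add: indicator_def ennreal_leI)
      next
        case False
        then have "s i \<ge> s m" by (intro s_antimono) auto
        then have "x \<notin> level_set f (s i)" using m by (simp add: level_set_def)
        then show ?thesis by simp
      qed
      have hs: "hh sums (C / (1 - r))"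
      proof -
        have "(\<lambda>i. r ^ i) sums (1 / (1 - r))" using r1 r2 by (intro geometric_sums) simp
        then have "(\<lambda>i. C * r ^ i) sums (C * (1 / (1 - r)))" by (rule sums_mult)
        moreover have "(\<lambda>i. hh (i + Suc m)) = (\<lambda>i. C * r ^ i)"
          by (rule ext) (simp add: hh_def C_def power_add mult_ac)
        ultimately have "(\<lambda>i. hh (i + Suc m)) sums (C / (1 - r))" by simp
        then have "hh sums (C / (1 - r) + (\<Sum>i<Suc m. hh i))" by (simp only: sums_iff_shift)
        moreover have "(\<Sum>i<Suc m. hh i) = 0" by (simp add: hh_def)
        ultimately show ?thesis by simp
      qed
      have hh0: "0 \<le> hh i" for i using r1 by (simp add: hh_def)
      have "(\<Sum>i. ennreal (w i) * indicator (level_set f (s i)) x) \<le> (\<Sum>i. ennreal (hh i))"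
        by (intro suminf_le summableI step)
      also have "\<dots> = ennreal (C / (1 - r))" by (rule suminf_ennreal_eq[OF hh0 hs])
      also have "C / (1 - r) = K * (\<kappa> * s (Suc m) powr p * \<alpha> powr (- \<gamma>))"
      proof -
        have eq: "T powr p * r ^ Suc (Suc m) = s (Suc m) powr p * r"
          by (simp add: s_powr r_def mult_ac)
        have "C = \<alpha> powr (- \<gamma>) * (T powr p * r ^ Suc (Suc m))" by (simp add: C_def mult.assoc)
        also have "\<dots> = \<alpha> powr (- \<gamma>) * (s (Suc m) powr p * r)" by (simp only: eq)
        finally have "C = \<alpha> powr (- \<gamma>) * s (Suc m) powr p * r" by (simp add: mult.assoc)
        then show ?thesis using \<kappa>0 r2 by (simp add: K_def field_simps)
      qed
      also have "ennreal (K * (\<kappa> * s (Suc m) powr p * \<alpha> powr (- \<gamma>))) = ennreal K * ennreal (\<kappa> * s (Suc m) powr p * \<alpha> powr (- \<gamma>))"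
        using K0 \<kappa>0 by (simp add: ennreal_mult'')
      also have "\<dots> \<le> ennreal K * Hx x"
      proof (intro mult_left_mono)
        show "ennreal (\<kappa> * s (Suc m) powr p * \<alpha> powr (- \<gamma>)) \<le> Hx x"
          unfolding Hx_def \<kappa>_def \<alpha>_def \<gamma>_def by (rule H_lower[OF k lamk p b m(1)])
      qed simp
      finally show ?thesis .
    qed
  qed
  also have "\<dots> = ennreal K * (\<integral>\<^sup>+x. Hx x \<partial>lborel)"
    by (rule nn_integral_cmult) (unfold Hx_def, rule lborel.borel_measurable_nn_integral, rule pair_meas[OF cont])
  finally show "ennreal (\<Sum>i. T powr p * r ^ Suc i * a i * a (Suc i) powr (- \<gamma>))
     \<le> ennreal (r / ((1 - r) * \<kappa>)) * (\<integral>\<^sup>+x. (\<integral>\<^sup>+h. ennreal (\<bar>fdiff k h f x\<bar> powr p) * ennreal (norm h powr (- (real DIM('a) + \<beta> * p))) \<partial>lborel) \<partial>lborel)"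
    by (simp add: u_def[abs_def] K_def Hx_def)
qed

end

lemma fubini_besov:
  fixes f :: "'a::euclidean_space \<Rightarrow> real"
  assumes cont: "continuous_on UNIV f"
  shows "(\<integral>\<^sup>+ h. (\<integral>\<^sup>+ x. ennreal (\<bar>fdiff k h f x\<bar> powr p) \<partial>lborel) * ennreal (norm h powr e) \<partial>lborel)
    = (\<integral>\<^sup>+x. (\<integral>\<^sup>+h. ennreal (\<bar>fdiff k h f x\<bar> powr p) * ennreal (norm h powr e) \<partial>lborel) \<partial>lborel)"
proof -
  have mx: "(\<lambda>x. ennreal (\<bar>fdiff k h f x\<bar> powr p)) \<in> borel_measurable lborel" for h
  proof -
    have "continuous_on UNIV ((\<lambda>z. fdiff k (fst z) f (snd z)) o (\<lambda>x::'a. (h, x)))"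
      by (rule continuous_on_compose) (auto intro!: continuous_intros continuous_on_subset[OF fdiff_cont[OF cont]])
    then have c: "continuous_on UNIV (\<lambda>x. fdiff k h f x)" by (simp add: o_def)
    have [measurable]: "(\<lambda>x. fdiff k h f x) \<in> borel_measurable borel"
      by (rule borel_measurable_continuous_onI[OF c])
    show ?thesis by measurable
  qed
  have "(\<integral>\<^sup>+ h. (\<integral>\<^sup>+ x. ennreal (\<bar>fdiff k h f x\<bar> powr p) \<partial>lborel) * ennreal (norm h powr e) \<partial>lborel)
      = (\<integral>\<^sup>+ h. (\<integral>\<^sup>+ x. ennreal (\<bar>fdiff k h f x\<bar> powr p) * ennreal (norm h powr e) \<partial>lborel) \<partial>lborel)"
    by (intro nn_integral_cong nn_integral_multc[symmetric] mx)
  also have "\<dots> = (\<integral>\<^sup>+x. (\<integral>\<^sup>+h. ennreal (\<bar>fdiff k h f x\<bar> powr p) * ennreal (norm h powr e) \<partial>lborel) \<partial>lborel)"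
    by (rule lborel_pair.Fubini'[OF pair_meas[OF cont]])
  finally show ?thesis .
qed

theorem corollary3p4:
  fixes \<beta> p :: real
  defines "n \<equiv> real DIM('a::euclidean_space)"
  assumes "0 < \<beta>" and "\<beta> < n" and "1 \<le> p" and "p < n / \<beta>"
  shows "\<exists>C1 C2. C1 > 0 \<and> C2 > 0 \<and> (\<forall>f :: 'a \<Rightarrow> real. C0_inf f \<longrightarrow>
     (enn2real (\<integral>\<^sup>+ x. ennreal (\<bar>f x\<bar> powr (n * p / (n - p * \<beta>))) \<partial>lborel)) powr ((n - p * \<beta>) / (n * p))
       \<le> C1 * (enn2real (\<integral>\<^sup>+ t. (indicator {0<..} t * ennreal (p * t powr (p - 1)
              * measure lborel (level_set f t) powr ((n - p * \<beta>) / n))) \<partial>lborel)) powr (1 / p)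
     \<and> (enn2real (\<integral>\<^sup>+ t. (indicator {0<..} t * ennreal (p * t powr (p - 1)
              * measure lborel (level_set f t) powr ((n - p * \<beta>) / n))) \<partial>lborel)) powr (1 / p)
       \<le> C2 * besov_norm \<beta> p f)"
proof -
  note b = assms(2) and bn = assms(3) and p1 = assms(4) and pn = assms(5)
  have n0: "0 < n" by (simp add: n_def)
  have p0: "0 < p" using p1 by simp
  have bp: "\<beta> * p < n" using pn b by (simp add: field_simps)
  have bp': "p * \<beta> < n" using bp by (simp add: mult.commute)
  have bp0: "0 < \<beta> * p" using b p0 by simp
  define k where "k = nat (1 + \<lfloor>\<beta>\<rfloor>)"
  have k1: "1 \<le> k" unfolding k_def using b by linarith
  define lam :: real where "lam = 2 ^ Suc k"
  have lamk: "2 ^ Suc k \<le> lam" by (simp add: lam_def)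
  have "(1::real) \<le> 2 ^ k" by (simp add: one_le_power)
  then have lam1: "1 < lam" unfolding lam_def by (simp only: power_Suc)
  define \<gamma> where "\<gamma> = \<beta> * p / n"
  have g: "0 < \<gamma>" "\<gamma> < 1" using bp bp0 n0 by (auto simp: \<gamma>_def)
  define e1 where "e1 = (n - p * \<beta>) / n"
  have e1g: "e1 = 1 - \<gamma>" using n0 by (simp add: e1_def \<gamma>_def field_simps)
  have e1: "0 < e1" "e1 < 1" using g e1g by auto
  define q where "q = n * p / (n - p * \<beta>)"
  have qe: "q = p / e1" using n0 bp' by (simp add: q_def e1_def field_simps)
  have q0: "0 < q" using qe p0 e1 by simp
  have qexp: "(n - p * \<beta>) / (n * p) = 1 / q" using n0 p0 bp' by (simp add: q_def field_simps)
  define r where "r = (1 / lam) powr p"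
  have r1: "0 < r" using lam1 by (simp add: r_def)
  have "(1/lam) powr p < 1 powr p" using lam1 p0 by (intro powr_less_mono2) auto
  then have r2: "r < 1" by (simp add: r_def)
  define \<theta> where "\<theta> = (r / 2) powr (1 / (1 - \<gamma>))"
  have \<theta>0: "0 < \<theta>" using r1 by (simp add: \<theta>_def)
  define \<kappa> where "\<kappa> = 2 powr (- p) * real k * (2 * real k / unit_ball_vol (real DIM('a))) powr (- (1 + \<gamma>))"
  have uv: "0 < unit_ball_vol (real DIM('a))" by simp
  have q1: "0 < 2 * real k / unit_ball_vol (real DIM('a))" using k1 uv by (intro divide_pos_pos) auto
  have q2: "0 < (2 * real k / unit_ball_vol (real DIM('a))) powr (- (1 + \<gamma>))"
  proof -
    have ne: "2 * real k / unit_ball_vol (real DIM('a)) \<noteq> 0" using q1 by linarith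
    show ?thesis using powr_gt_zero[of "2 * real k / unit_ball_vol (real DIM('a))" "- (1 + \<gamma>)"] ne by blast
  qed
  have q3: "0 < 2 powr (- p) * real k" using k1 by simp
  have \<kappa>0: "0 < \<kappa>" unfolding \<kappa>_def using q2 q3 by (rule mult_pos_pos[rotated])
  define Ku where "Ku = r / ((1 - r) * \<kappa>)"
  define Ks where "Ks = 2 / (r * \<theta>)"
  define cl where "cl = p * (lam - 1) * lam powr (- p)"
  define cu where "cu = p * lam powr p"
  have Ku0: "0 < Ku" using r1 r2 \<kappa>0 by (simp add: Ku_def)
  have Ks0: "0 < Ks" using r1 \<theta>0 by (simp add: Ks_def)
  have cl0: "0 < cl" using p0 lam1 by (simp add: cl_def)
  have cu0: "0 < cu" using p0 lam1 by (simp add: cu_def)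
  define C1 where "C1 = lam * cl powr (- 1 / p)"
  define C2 where "C2 = (cu * Ks * Ku) powr (1 / p)"
  have C10: "0 < C1" using lam1 cl0 by (simp add: C1_def)
  have C20: "0 < C2" using cu0 Ks0 Ku0 by (simp add: C2_def)
  show ?thesis
  proof (rule exI[of _ C1], rule exI[of _ C2], intro conjI allI impI C10 C20)
    fix f :: "'a \<Rightarrow> real"
    assume f: "C0_inf f"
    obtain M where M: "M \<ge> 0" "\<And>x. \<bar>f x\<bar> \<le> M" using C0_inf_bounded[OF f] by blast
    define T where "T = M + 1"
    have Tb: "\<bar>f x\<bar> \<le> T" for x using M(2)[of x] by (simp add: T_def)
    have T0: "0 < T" using M by (simp add: T_def)
    have cont: "continuous_on UNIV f" using f by (rule C0_inf_cont)
    have supp: "compact (closure {x. f x \<noteq> 0})" using f by (simp add: C0_inf_def)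
    interpret L: lvl f T lam using cont T0 Tb lam1 supp by unfold_locales auto
    define N where "N = (\<integral>\<^sup>+ t. (indicator {0<..} t * ennreal (p * t powr (p - 1)
              * measure lborel (level_set f t) powr ((n - p * \<beta>) / n))) \<partial>lborel)"
    define Bint where "Bint = (\<integral>\<^sup>+ h. ((\<integral>\<^sup>+ x. ennreal (\<bar>fdiff k h f x\<bar> powr p) \<partial>lborel)
         * ennreal (norm h powr (- (real DIM('a) + \<beta> * p)))) \<partial>lborel)"
    define LHS where "LHS = (\<integral>\<^sup>+ x. ennreal (\<bar>f x\<bar> powr (n * p / (n - p * \<beta>))) \<partial>lborel)"
    define X where "X = suminf (L.cc p e1)"
    define U where "U = (\<Sum>i. T powr p * r ^ Suc i * L.a i * L.a (Suc i) powr (- \<gamma>))"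
    have besov: "besov_norm \<beta> p f = enn2real Bint powr (1 / p)"
      by (simp add: besov_norm_def Bint_def k_def)
    have Bfin: "Bint < \<infinity>" unfolding Bint_def k_def by (rule besov_int_finite[OF f b p0])
    have ccf: "L.cc p e1 = (\<lambda>i. T powr p * r ^ i * L.a i powr (1 - \<gamma>))"
      by (rule ext) (simp add: L.cc_def L.s_powr r_def e1g)
    have X0: "0 \<le> X" unfolding X_def using L.cc_summable[OF e1 p0]
      by (intro suminf_nonneg) (auto simp: L.cc_nonneg)
    have hX: "X \<le> Ks * U"
      using seq_comb(3)[of L.a L.VS r \<gamma> "T powr p", OF L.a_nonneg L.a_mono L.a_bound r1 r2 g]
      by (simp add: X_def ccf U_def Ks_def \<theta>_def)
    have hU: "ennreal U \<le> ennreal Ku * Bint"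
    proof -
      have "ennreal U \<le> ennreal Ku * (\<integral>\<^sup>+x. (\<integral>\<^sup>+h. ennreal (\<bar>fdiff k h f x\<bar> powr p) * ennreal (norm h powr (- (real DIM('a) + \<beta> * p))) \<partial>lborel) \<partial>lborel)"
        using L.u_bound(2)[OF k1 lamk p1 b bp[unfolded n_def]]
        by (simp add: U_def Ku_def r_def \<kappa>_def \<gamma>_def n_def)
      also have "\<dots> = ennreal Ku * Bint" unfolding Bint_def by (simp add: fubini_besov[OF cont])
      finally show ?thesis .
    qed
    have U0: "0 \<le> U"
    proof -
      have "summable (\<lambda>i. T powr p * r ^ Suc i * L.a i * L.a (Suc i) powr (- \<gamma>))"
        using L.u_bound(1)[OF k1 lamk p1 b bp[unfolded n_def]] by (simp add: r_def \<gamma>_def n_def)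
      then show ?thesis unfolding U_def using r1 L.a_nonneg by (intro suminf_nonneg) auto
    qed
    have Nup: "N \<le> ennreal (cu * X)"
      unfolding N_def X_def cu_def using L.mid_upper[OF p1 e1] by (simp add: e1_def)
    have Nlow: "ennreal (cl * X) \<le> N"
      unfolding N_def X_def cl_def using L.mid_lower[OF p1 e1] by (simp add: e1_def)
    have Lup: "LHS \<le> ennreal (lam powr q * X powr (q / p))"
      unfolding LHS_def X_def using L.lhs_upper[OF p1 e1 qe] by (simp add: q_def)
    have Nfin: "N < \<infinity>" using Nup by (simp add: le_less_trans)
    have NB: "N \<le> ennreal (cu * Ks * Ku) * Bint"
    proof -
      have "N \<le> ennreal (cu * X)" by (rule Nup)
      also have "\<dots> \<le> ennreal (cu * (Ks * U))" using hX cu0 by (intro ennreal_leI mult_left_mono) auto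
      also have "\<dots> = ennreal (cu * Ks) * ennreal U" using cu0 Ks0 U0 by (simp add: ennreal_mult'' mult.assoc)
      also have "\<dots> \<le> ennreal (cu * Ks) * (ennreal Ku * Bint)" by (intro mult_left_mono hU) auto
      also have "\<dots> = ennreal (cu * Ks * Ku) * Bint" using cu0 Ks0 Ku0 by (simp add: ennreal_mult'' mult.assoc)
      finally show ?thesis .
    qed
    have NBr: "enn2real N \<le> cu * Ks * Ku * enn2real Bint"
    proof -
      have "enn2real N \<le> enn2real (ennreal (cu * Ks * Ku) * Bint)"
        using NB Bfin by (intro enn2real_mono) (auto simp: ennreal_mult_less_top)
      also have "\<dots> = cu * Ks * Ku * enn2real Bint" using cu0 Ks0 Ku0 by (simp add: enn2real_mult)
      finally show ?thesis .
    qed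
    have res2: "enn2real N powr (1 / p) \<le> C2 * besov_norm \<beta> p f"
    proof -
      have "enn2real N powr (1 / p) \<le> (cu * Ks * Ku * enn2real Bint) powr (1 / p)"
        using NBr p0 by (intro powr_mono2) auto
      also have "\<dots> = C2 * besov_norm \<beta> p f"
        using cu0 Ks0 Ku0 by (simp add: C2_def besov powr_mult)
      finally show ?thesis .
    qed
    have res1: "enn2real LHS powr ((n - p * \<beta>) / (n * p)) \<le> C1 * enn2real N powr (1 / p)"
    proof -
      have XN: "X \<le> enn2real N / cl"
      proof -
        have "enn2real (ennreal (cl * X)) \<le> enn2real N" by (rule enn2real_mono[OF Nlow]) (use Nfin in simp)
        then have "cl * X \<le> enn2real N" using cl0 X0 by simp
        then show ?thesis using cl0 by (simp add: field_simps)
      qed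
      have LX: "enn2real LHS \<le> lam powr q * X powr (q / p)"
      proof -
        have "enn2real LHS \<le> enn2real (ennreal (lam powr q * X powr (q / p)))"
          using Lup by (intro enn2real_mono) auto
        then show ?thesis by simp
      qed
      have "enn2real LHS powr ((n - p * \<beta>) / (n * p)) = enn2real LHS powr (1 / q)" by (simp add: qexp)
      also have "\<dots> \<le> (lam powr q * X powr (q / p)) powr (1 / q)"
        using LX q0 by (intro powr_mono2) auto
      also have "\<dots> = lam * X powr (1 / p)"
        using lam1 q0 p0 X0 by (simp add: powr_mult powr_powr)
      also have "\<dots> \<le> lam * (enn2real N / cl) powr (1 / p)"
        using XN X0 p0 lam1 by (intro mult_left_mono powr_mono2) auto
      also have "\<dots> = C1 * enn2real N powr (1 / p)"
      proof -
        have d: "(enn2real N / cl) powr (1 / p) = enn2real N powr (1 / p) / cl powr (1 / p)"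
          using cl0 by (intro powr_divide)
        have m: "cl powr (- 1 / p) = inverse (cl powr (1 / p))"
          using cl0 by (simp add: powr_minus[symmetric])
        show ?thesis unfolding d C1_def m by (simp add: divide_inverse mult_ac)
      qed
      finally show ?thesis .
    qed
    from res1 show "(enn2real (\<integral>\<^sup>+ x. ennreal (\<bar>f x\<bar> powr (n * p / (n - p * \<beta>))) \<partial>lborel)) powr ((n - p * \<beta>) / (n * p))
       \<le> C1 * (enn2real (\<integral>\<^sup>+ t. (indicator {0<..} t * ennreal (p * t powr (p - 1)
              * measure lborel (level_set f t) powr ((n - p * \<beta>) / n))) \<partial>lborel)) powr (1 / p)"
      by (simp only: LHS_def N_def)
    from res2 show "(enn2real (\<integral>\<^sup>+ t. (indicator {0<..} t * ennreal (p * t powr (p - 1)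
              * measure lborel (level_set f t) powr ((n - p * \<beta>) / n))) \<partial>lborel)) powr (1 / p)
       \<le> C2 * besov_norm \<beta> p f"
      by (simp only: N_def)
  qed
qed

end
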